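(* Assume $q \in V_0$ and, for each $i\in\{1,2\}$, $q\bmod n_i$ is a quadratic residue modulo $n_i$. For $(i,j,h)\in\{0,1\}^3$ let $\mathcal{V}_{(i,j,h)}$ be the cyclic code of length $n$ over $\mathrm{GF}(q)$ with generator polynomial $v_i(x)d_j^{(n_1)}(x)d_h^{(n_2)}(x)$. Then each $\mathcal{V}_{(i,j,h)}$ has length $n$ and dimension $(n+1)/2$, and its minimum odd-like weight $d_{(i,j,h)}$ satisfies $d_{(i,j,h)}\ge\sqrt n$. Moreover, if $n_1\equiv -1\pmod 8$ and $n_2\equiv -1\pmod 8$, then $d_{(i,j,h)}^2-d_{(i,j,h)}+1\ge n$.
   Context: Let $n_1,n_2$ be distinct odd primes, $n=n_1n_2$, and let $q$ be a prime power with $\gcd(q,n)=1$. Let $d=\gcd(n_1-1,n_2-1)$ and $e=(n_1-1)(n_2-1)/d$. Let $g_1,g_2$ be primitive roots modulo $n_1,n_2$ respectively, let $g$ be the integer modulo $n$ with $g\equiv g_1 \pmod{n_1}$, $g\equiv g_2\pmod{n_2}$, and let $\nu$ be the integer modulo $n$ with $\nu\equiv g\pmod{n_1}$, $\nu\equiv 1\pmod{n_2}$. It is known that every element of $\mathbb{Z}_n^*$ can be written uniquely as $g^s\nu^i$ with $0\le s\le e-1$, $0\le i\le d-1$. Define $V_0=\{g^s\nu^i: 0\le s\le e-1,\ 0\le i\le d-1,\ s+i\text{ even}\}$ and $V_1=\{g^s\nu^i: 0\le s\le e-1,\ 0\le i\le d-1,\ s+i\text{ odd}\}$. For $j\in\{1,2\}$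 let $D_0^{(n_j)}$, $D_1^{(n_j)}$ be the sets of quadratic residues and nonresidues modulo $n_j$. Let $N=\mathrm{ord}_n(q)$ and $\theta$ a primitive $n$-th root of unity in $\mathrm{GF}(q^N)$. Define $v_i(x)=\prod_{j\in V_i}(x-\theta^j)$, $d_i^{(n_1)}(x)=\prod_{j\in D_i^{(n_1)}}(x-\theta^{n_2 j})$, $d_i^{(n_2)}(x)=\prod_{j\in D_i^{(n_2)}}(x-\theta^{n_1 j})$ for $i\in\{0,1\}$; under the hypotheses these lie in $\mathrm{GF}(q)[x]$. Cyclic codes of length $n$ are identified with ideals of $\mathrm{GF}(q)[x]/(x^n-1)$. A codeword $(c_0,\dots,c_{n-1})$ is odd-like if $\sum_i c_i\neq 0$; the minimum odd-like weight is the minimum Hamming weight of odd-like codewords. *)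

theory Defs
  imports "HOL-Number_Theory.Number_Theory" "HOL-Computational_Algebra.Polynomial"
begin

definition Vset :: "nat \<Rightarrow> nat \<Rightarrow> nat \<Rightarrow> nat \<Rightarrow> nat \<Rightarrow> nat \<Rightarrow> nat set" where
  "Vset n g nu d e i = {(g ^ s * nu ^ k) mod n | s k. s < e \<and> k < d \<and> (s + k) mod 2 = i}"

definition Dset :: "nat \<Rightarrow> nat \<Rightarrow> nat set" where
  "Dset p i = {x. 0 < x \<and> x < p \<and> Legendre (int x) (int p) = (if i = 0 then 1 else -1)}"

definition root_prod :: "'b::field \<Rightarrow> nat \<Rightarrow> nat set \<Rightarrow> 'b poly" where
  "root_prod theta m S = (\<Prod>j\<in>S. [:- (theta ^ (m * j)), 1:])"

text \<open>Cyclic code of length n generated by G: the ideal (G) in GF(q)[x]/(x^n - 1),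
  codewords represented by their reduced representatives (degree < n).\<close>
definition cyclic_code :: "nat \<Rightarrow> 'a::field poly \<Rightarrow> 'a poly set" where
  "cyclic_code n G = {(a * G) mod (monom 1 n - 1) | a. True}"

definition code_dim :: "'a::field poly set \<Rightarrow> nat" where
  "code_dim C = vector_space.dim (smult :: 'a \<Rightarrow> 'a poly \<Rightarrow> 'a poly) C"

definition hamming_wt :: "nat \<Rightarrow> 'a::zero poly \<Rightarrow> nat" where
  "hamming_wt n c = card {i. i < n \<and> coeff c i \<noteq> 0}"

definition odd_like :: "nat \<Rightarrow> 'a::comm_monoid_add poly \<Rightarrow> bool" where
  "odd_like n c \<longleftrightarrow> (\<Sum>i<n. coeff c i) \<noteq> 0"

definition min_odd_like_weight :: "nat \<Rightarrow> 'a::field poly set \<Rightarrow> nat" where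
  "min_odd_like_weight n C = Min {hamming_wt n c | c. c \<in> C \<and> odd_like n c}"

end

theory Submission
  imports Defs
begin
lemma hom_sum:
  assumes "\<And>x y. f (x + y) = f x + f y" "f 0 = 0"
  shows "f (sum g A) = (\<Sum>a\<in>A. f (g a))"
  by (induction A rule: infinite_finite_induct) (auto simp: assms)

lemma hom_prod:
  assumes "\<And>x y. f (x * y) = f x * f y" "f 1 = 1"
  shows "f (prod g A) = (\<Prod>a\<in>A. f (g a))"
  by (induction A rule: infinite_finite_induct) (auto simp: assms)

lemma hom_uminus:
  fixes f :: "'a::ab_group_add \<Rightarrow> 'b::ab_group_add"
  assumes "\<And>x y. f (x + y) = f x + f y"
  shows "f (- x) = - f x"
proof -
  have "f 0 = 0" using assms[of 0 0] by simp
  moreover have "f (-x) + f x = f 0" using assms[of "-x" x] by simp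
  ultimately show ?thesis by (simp add: eq_neg_iff_add_eq_0)
qed

lemma map_poly_hom_add:
  assumes "\<And>x y. f (x + y) = f x + f y" "f 0 = 0"
  shows "map_poly f (p + q) = map_poly f p + map_poly f q"
  by (intro poly_eqI) (simp add: coeff_map_poly assms)

lemma map_poly_hom_mult:
  fixes f :: "'a::comm_semiring_1 \<Rightarrow> 'b::comm_semiring_1"
  assumes "\<And>x y. f (x + y) = f x + f y" "f 0 = 0" "\<And>x y. f (x * y) = f x * f y"
  shows "map_poly f (p * q) = map_poly f p * map_poly f q"
  by (intro poly_eqI) (simp add: coeff_map_poly assms coeff_mult hom_sum[of f, OF assms(1,2)])

lemma map_poly_hom_prod:
  fixes f :: "'a::comm_semiring_1 \<Rightarrow> 'b::comm_semiring_1"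
  assumes "\<And>x y. f (x + y) = f x + f y" "f 0 = 0" "\<And>x y. f (x * y) = f x * f y" "f 1 = 1"
  shows "map_poly f (prod g A) = (\<Prod>a\<in>A. map_poly f (g a))"
  by (induction A rule: infinite_finite_induct) (auto simp: map_poly_hom_mult assms)

lemma hom_diff:
  fixes f :: "'a::ab_group_add \<Rightarrow> 'b::ab_group_add"
  assumes "\<And>x y. f (x + y) = f x + f y"
  shows "f (x - y) = f x - f y"
  using assms[of x "-y"] hom_uminus[of f y, OF assms] by simp

lemma map_poly_hom_diff:
  fixes f :: "'a::comm_ring_1 \<Rightarrow> 'b::comm_ring_1"
  assumes "\<And>x y. f (x + y) = f x + f y"
  shows "map_poly f (p - q) = map_poly f p - map_poly f q"
proof -
  have f0: "f 0 = 0" using assms[of 0 0] by simp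
  show ?thesis
    by (intro poly_eqI) (simp add: coeff_map_poly f0 hom_diff[of f, OF assms])
qed

lemma map_poly_linear:
  fixes f :: "'a::comm_ring_1 \<Rightarrow> 'b::comm_ring_1"
  assumes "\<And>x y. f (x + y) = f x + f y" "f 1 = 1"
  shows "map_poly f [:- a, 1:] = [:- f a, 1:]"
proof -
  have f0: "f 0 = 0" using assms(1)[of 0 0] by simp
  show ?thesis by (simp add: map_poly_pCons f0 assms hom_uminus[OF assms(1)])
qed

lemma finite_field_pow_card:
  fixes x :: "'a :: {field,finite}"
  shows "x ^ card (UNIV :: 'a set) = x"
proof (cases "x = 0")
  case False
  have "x * (\<Prod>y\<in>UNIV-{0}. x * y) = x * x ^ (card (UNIV :: 'a set) - 1) * \<Prod>(UNIV-{0})"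
    by (simp add: prod.distrib mult_ac)
  also have "x * x ^ (card (UNIV :: 'a set) - 1) = x ^ Suc (card (UNIV :: 'a set) - 1)"
    by (subst power_Suc) auto
  also have "Suc (card (UNIV :: 'a set) - 1) = card (UNIV :: 'a set)"
    using finite_UNIV_card_ge_0[where ?'a = 'a] by simp
  also have "(\<Prod>y\<in>UNIV-{0}. x * y) = (\<Prod>y\<in>UNIV-{0}. y)"
    by (rule prod.reindex_bij_witness[of _ "\<lambda>y. y / x" "\<lambda>y. x * y"]) (use False in auto)
  finally show ?thesis
    by simp
qed (use finite_UNIV_card_ge_0[where ?'a = 'a] in auto)

lemma field_card_ge2: "card (UNIV :: 'a :: {field,finite} set) \<ge> 2"
proof -
  have "{0, 1::'a} \<subseteq> UNIV" by simp
  hence "card {0,1::'a} \<le> card (UNIV::'a set)" by (intro card_mono) auto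
  thus ?thesis by simp
qed

lemma binom_card_zero:
  fixes dummy :: "'a :: {field,finite}"
  assumes "0 < k" "k < card (UNIV :: 'a set)"
  shows "(of_nat (card (UNIV :: 'a set) choose k) :: 'a) = 0"
proof -
  define q where "q = card (UNIV :: 'a set)"
  define D :: "'a poly" where "D = (\<Sum>j\<in>{1..<q}. monom (of_nat (q choose j)) j)"
  have coeffD: "coeff D i = (if i \<in> {1..<q} then of_nat (q choose i) else 0)" for i
    unfolding D_def by (simp add: coeff_sum coeff_monom)
  have degD: "degree D < q"
  proof -
    have "degree D \<le> q - 1"
      by (rule degree_le) (auto simp: coeffD)
    moreover have "q \<ge> 2" using field_card_ge2[where 'a='a] q_def by simp
    ultimately show ?thesis by simp
  qed
  have polyD: "poly D x = (x + 1) ^ q - x ^ q - 1" for x :: 'a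
  proof -
    have "(x + 1) ^ q = (\<Sum>j\<le>q. of_nat (q choose j) * x ^ j * 1 ^ (q - j))"
      by (rule binomial_ring)
    also have "\<dots> = (\<Sum>j\<in>insert 0 (insert q {1..<q}). of_nat (q choose j) * x ^ j)"
      by (intro sum.cong) auto
    also have "\<dots> = 1 + x ^ q + (\<Sum>j\<in>{1..<q}. of_nat (q choose j) * x ^ j)"
      using field_card_ge2[where 'a='a] q_def by (subst sum.insert; auto)+
    finally show ?thesis
      unfolding D_def by (simp add: poly_sum poly_monom)
  qed
  have "poly D x = 0" for x
    using finite_field_pow_card[of x] finite_field_pow_card[of "x+1"] by (simp add: polyD q_def)
  hence "D = 0"
  proof (rule_tac ccontr)
    assume "\<And>x. poly D x = 0" "D \<noteq> 0"
    hence "card {x. poly D x = 0} \<le> degree D" by (intro card_poly_roots_bound)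
    with \<open>\<And>x. poly D x = 0\<close> have "q \<le> degree D" by (simp add: q_def)
    with degD show False by simp
  qed
  hence "coeff D k = 0" by simp
  with assms show ?thesis by (simp add: coeffD q_def)
qed

locale embed =
  fixes emb :: "'a::{field,finite} \<Rightarrow> 'b::{field,finite}"
  assumes inj: "inj emb" and one: "emb 1 = 1"
    and add: "\<And>x y. emb (x + y) = emb x + emb y" and mult: "\<And>x y. emb (x * y) = emb x * emb y"
begin

lemma zero: "emb 0 = 0" using add[of 0 0] by (metis add.right_neutral add_left_cancel)

lemma uminus: "emb (- x) = - emb x" by (rule hom_uminus[OF add])

lemma diff: "emb (x - y) = emb x - emb y" by (rule hom_diff[OF add])

lemma pow: "emb (x ^ m) = emb x ^ m" by (induction m) (auto simp: one mult)

lemma of_nat: "emb (of_nat m) = of_nat m" by (induction m) (auto simp: one add zero)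

lemma eq0: "emb x = 0 \<longleftrightarrow> x = 0" using inj zero by (metis injD)

lemma sum: "emb (sum f A) = (\<Sum>a\<in>A. emb (f a))" by (rule hom_sum[OF add zero])

lemma mp_add: "map_poly emb (p + q) = map_poly emb p + map_poly emb q"
  by (rule map_poly_hom_add[OF add zero])
lemma mp_mult: "map_poly emb (p * q) = map_poly emb p * map_poly emb q"
  by (rule map_poly_hom_mult[OF add zero mult])
lemma mp_diff: "map_poly emb (p - q) = map_poly emb p - map_poly emb q"
  by (rule map_poly_hom_diff[OF add])
lemma mp_monom: "map_poly emb (monom c k) = monom (emb c) k"
  by (simp add: map_poly_monom zero)
lemma mp_one: "map_poly emb 1 = 1" by (simp add: one)
lemma degree_mp: "degree (map_poly emb p) = degree p"
  by (rule degree_map_poly) (simp add: eq0)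
lemma coeff_mp: "coeff (map_poly emb p) i = emb (coeff p i)"
  by (simp add: coeff_map_poly zero)
lemma mp_eq0: "map_poly emb p = 0 \<longleftrightarrow> p = 0"
  by (rule map_poly_eq_0_iff) (auto simp: zero eq0)
lemma mp_inj: "map_poly emb p = map_poly emb r \<longleftrightarrow> p = r"
  using mp_eq0[of "p - r"] by (simp add: mp_diff)

definition q where "q = card (UNIV :: 'a set)"

lemma q_ge2: "q \<ge> 2" unfolding q_def by (rule field_card_ge2)

lemma frob_add: "(y + z :: 'b) ^ q = y ^ q + z ^ q"
proof -
  have "(y + z) ^ q = (\<Sum>k\<le>q. of_nat (q choose k) * y ^ k * z ^ (q - k))"
    by (rule binomial_ring)
  also have "\<dots> = (\<Sum>k\<in>{0,q}. of_nat (q choose k) * y ^ k * z ^ (q - k))"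
  proof (intro sum.mono_neutral_right ballI)
    fix k assume "k \<in> {..q} - {0, q}"
    hence k: "k > 0" "k < q" by auto
    have "(of_nat (q choose k) :: 'b) = emb (of_nat (q choose k))" by (simp add: of_nat)
    also have "(of_nat (q choose k) :: 'a) = 0" using binom_card_zero[of k] k by (simp add: q_def)
    finally show "of_nat (q choose k) * y ^ k * z ^ (q - k) = (0::'b)" by (simp add: zero)
  qed auto
  finally show ?thesis using q_ge2 by (simp add: add_ac)
qed

lemma frob_mult: "(y * z :: 'b) ^ q = y ^ q * z ^ q" by (simp add: power_mult_distrib)

lemma range_emb: "range emb = {y. y ^ q = y}"
proof -
  have sub: "range emb \<subseteq> {y. y ^ q = y}"
  proof safe
    fix x show "emb x ^ q = emb x" using finite_field_pow_card[of x] pow[of x q] by (simp add: q_def)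
  qed
  define R :: "'b poly" where "R = monom 1 q + [:0, -1:]"
  have degR: "degree R = q" using q_ge2 unfolding R_def
    using degree_add_eq_left[of "[:0, -1:]" "monom (1::'b) q"] by (simp add: degree_monom_eq)
  hence "R \<noteq> 0" using q_ge2 by auto
  have "{y. y ^ q = y} = {y. poly R y = 0}" by (auto simp: R_def poly_monom)
  hence c: "card {y. y ^ q = (y::'b)} \<le> q"
    using card_poly_roots_bound[OF \<open>R \<noteq> 0\<close>] degR by simp
  have "card (range emb) = q" using inj by (simp add: card_image q_def)
  have "card (range emb) \<le> card {y. y ^ q = (y::'b)}" by (rule card_mono) (use sub in auto)
  hence "card (range emb) = card {y. y ^ q = (y::'b)}" using c \<open>card (range emb) = q\<close> by simp
  thus ?thesis by (intro card_subset_eq sub) auto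
qed

lemma descend:
  fixes P :: "'b poly"
  assumes "\<And>i. coeff P i ^ q = coeff P i"
  shows "\<exists>G. map_poly emb G = P"
proof -
  have inv0: "inv_into UNIV emb 0 = 0" using zero inj by (metis inv_f_f)
  have "map_poly emb (map_poly (inv_into UNIV emb) P) = map_poly (emb \<circ> inv_into UNIV emb) P"
    by (rule map_poly_map_poly) (auto simp: zero inv0)
  also have "\<dots> = P"
  proof (rule map_poly_idI)
    fix x assume "x \<in> set (coeffs P)"
    then obtain i where "x = coeff P i" by (auto simp: coeffs_def split: if_splits)
    hence "x \<in> range emb" using assms range_emb by auto
    thus "(emb \<circ> inv_into UNIV emb) x = x" by (auto simp: f_inv_into_f)
  qed
  finally show ?thesis by blast
qed

end

lemma roots_prod_dvd:
  fixes p :: "'a::field poly"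
  assumes "finite S" "\<And>a. a \<in> S \<Longrightarrow> poly p a = 0"
  shows "(\<Prod>a\<in>S. [:-a, 1:]) dvd p"
  using assms
proof (induction S arbitrary: p rule: finite_induct)
  case empty then show ?case by simp
next
  case (insert a S p)
  have "poly p a = 0" using insert by simp
  then obtain r where r: "p = [:-a, 1:] * r" by (auto simp: poly_eq_0_iff_dvd elim: dvdE)
  have "poly r b = 0" if "b \<in> S" for b
  proof -
    have "poly p b = 0" using insert that by simp
    moreover have "b \<noteq> a" using that insert by auto
    ultimately show ?thesis by (auto simp: r)
  qed
  hence "(\<Prod>a\<in>S. [:-a, 1:]) dvd r" using insert by blast
  thus ?case by (simp only: prod.insert[OF insert(1,2)] r) (rule mult_dvd_mono[OF dvd_refl])
qed

lemma poly_sum_lt: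
  fixes p :: "'a::comm_semiring_1 poly"
  assumes "degree p < n"
  shows "poly p x = (\<Sum>i<n. coeff p i * x ^ i)"
  unfolding poly_altdef
  by (rule sum.mono_neutral_left) (use assms in \<open>auto simp: coeff_eq_0\<close>)

locale cyc = embed emb for emb :: "'a::{field,finite} \<Rightarrow> 'b::{field,finite}" +
  fixes theta :: 'b and n :: nat and Z :: "nat set"
  assumes n_gt1: "n > 1" and theta_n: "theta ^ n = 1"
    and theta_prim: "\<And>k. 0 < k \<Longrightarrow> k < n \<Longrightarrow> theta ^ k \<noteq> 1"
    and coprime_qn: "coprime q n" and Z_sub: "Z \<subseteq> {1..<n}"
    and Z_q: "\<And>k. k \<in> Z \<Longrightarrow> (q * k) mod n \<in> Z"
begin

lemma finZ: "finite Z" using Z_sub finite_subset by blast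

lemma theta_mod: "theta ^ m = theta ^ (m mod n)"
proof -
  have "theta ^ m = theta ^ (n * (m div n) + m mod n)" by (simp only: mult_div_mod_eq)
  also have "\<dots> = theta ^ (m mod n)" by (simp only: power_add power_mult theta_n power_one mult_1)
  finally show ?thesis .
qed

lemma theta_ne0: "theta \<noteq> 0"
proof
  assume "theta = 0"
  hence "theta ^ n = 0" using n_gt1 by simp
  with theta_n show False by simp
qed

lemma theta_eq1_iff: "theta ^ m = 1 \<longleftrightarrow> m mod n = 0"
proof
  assume "theta ^ m = 1"
  hence "theta ^ (m mod n) = 1" by (simp flip: theta_mod)
  thus "m mod n = 0" using theta_prim[of "m mod n"] n_gt1 by (cases "m mod n = 0") auto
next
  assume "m mod n = 0" thus "theta ^ m = 1" by (subst theta_mod) simp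
qed

lemma theta_inj: "k < n \<Longrightarrow> k' < n \<Longrightarrow> theta ^ k = theta ^ k' \<Longrightarrow> k = k'"
proof (induction k k' rule: linorder_wlog)
  case (le a b)
  have "theta ^ b = theta ^ a * theta ^ (b - a)" using le(1) by (metis le_add_diff_inverse power_add)
  hence "theta ^ (b - a) = 1" using le theta_ne0 by simp
  hence "(b - a) mod n = 0" by (simp add: theta_eq1_iff)
  thus ?case using le by auto
qed auto

definition P :: "'b poly" where "P = (\<Prod>k\<in>Z. [:- (theta ^ k), 1:])"

lemma P_alt: "P = (\<Prod>a\<in>(\<lambda>k. theta ^ k) ` Z. [:- a, 1:])"
  unfolding P_def
proof (rule prod.reindex[symmetric, unfolded comp_def])
  show "inj_on (\<lambda>k. theta ^ k) Z"
  proof (rule inj_onI)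
    fix x y assume "x \<in> Z" "y \<in> Z" "theta ^ x = theta ^ y"
    moreover have "x < n" "y < n" using \<open>x \<in> Z\<close> \<open>y \<in> Z\<close> Z_sub by auto
    ultimately show "x = y" using theta_inj by blast
  qed
qed

lemma P_frob: "coeff P i ^ q = coeff P i"
proof -
  define fr :: "'b \<Rightarrow> 'b" where "fr = (\<lambda>y. y ^ q)"
  have fadd: "\<And>x y. fr (x + y) = fr x + fr y" by (simp add: fr_def frob_add)
  have fmult: "\<And>x y. fr (x * y) = fr x * fr y" by (simp add: fr_def frob_mult)
  have f0: "fr 0 = 0" using q_ge2 by (simp add: fr_def)
  have f1: "fr 1 = 1" by (simp add: fr_def)
  have "map_poly fr P = (\<Prod>k\<in>Z. [:- fr (theta ^ k), 1:])"
    unfolding P_def by (simp add: map_poly_hom_prod[OF fadd f0 fmult f1] map_poly_linear[OF fadd f1])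
  also have "\<dots> = (\<Prod>k\<in>Z. [:- (theta ^ ((q * k) mod n)), 1:])"
    by (intro prod.cong refl) (simp add: fr_def flip: theta_mod power_mult, simp add: mult.commute)
  also have "\<dots> = P"
  proof -
    define mu where "mu = (\<lambda>k. (q * k) mod n)"
    have inj: "inj_on mu Z"
    proof (rule inj_onI)
      fix x y assume "x \<in> Z" "y \<in> Z" "mu x = mu y"
      hence "[q * x = q * y] (mod n)" by (simp add: mu_def cong_def)
      hence "[x = y] (mod n)" using coprime_qn by (metis cong_mult_lcancel_nat)
      moreover have "x < n" "y < n" using \<open>x \<in> Z\<close> \<open>y \<in> Z\<close> Z_sub by auto
      ultimately show "x = y" by (simp add: cong_def)
    qed
    have sub: "mu ` Z \<subseteq> Z" using Z_q by (auto simp: mu_def)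
    have eq: "mu ` Z = Z" by (rule card_subset_eq[OF finZ sub]) (simp add: card_image[OF inj])
    have "(\<Prod>k\<in>Z. [:- (theta ^ ((q * k) mod n)), 1:]) = (\<Prod>k\<in>mu ` Z. [:- (theta ^ k), 1:])"
      by (subst prod.reindex[OF inj]) (simp add: mu_def)
    thus ?thesis by (simp add: eq P_def)
  qed
  finally have "coeff (map_poly fr P) i = coeff P i" by simp
  moreover have "coeff (map_poly fr P) i = fr (coeff P i)" by (rule coeff_map_poly[of fr, OF f0])
  ultimately show ?thesis by (simp add: fr_def)
qed

definition G :: "'a poly" where "G = (SOME G. map_poly emb G = P)"

lemma G: "map_poly emb G = P"
  unfolding G_def by (rule someI_ex) (rule descend[OF P_frob])

lemma degP: "degree P = card Z"
  unfolding P_def by (subst degree_prod_eq_sum_degree) auto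

lemma degG: "degree G = card Z" using degP G degree_mp by metis

lemma cardZ: "card Z < n"
proof -
  have "card Z \<le> card {1..<n}" by (rule card_mono) (use Z_sub in auto)
  thus ?thesis using n_gt1 by simp
qed

lemma G_ne0: "G \<noteq> 0"
proof
  assume "G = 0"
  hence "P = 0" using G by simp
  moreover have "P \<noteq> 0" unfolding P_def by (simp add: finZ)
  ultimately show False by simp
qed

definition X :: "'a poly" where "X = monom 1 n - 1"

lemma mapX: "map_poly emb X = monom 1 n - 1"
  unfolding X_def by (simp add: mp_diff mp_monom one)

lemma degX: "degree X = n"
proof -
  have "degree (monom (1::'a) n + (- 1)) = n"
    using n_gt1 by (subst degree_add_eq_left) (auto simp: degree_monom_eq)
  thus ?thesis by (simp add: X_def)
qed

lemma poly_mapX_theta: "poly (map_poly emb X) (theta ^ k) = 0"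
  by (simp add: mapX poly_monom) (metis mult.commute power_mult power_one theta_n)

lemma P_dvd: "P dvd map_poly emb X"
  unfolding P_alt by (rule roots_prod_dvd) (use finZ poly_mapX_theta in auto)

lemma G_dvd: "G dvd X"
proof -
  define R where "R = X mod G"
  have XR: "X = (X div G) * G + R" by (simp add: R_def)
  have "map_poly emb R = map_poly emb X - map_poly emb (X div G) * P"
    using arg_cong[OF XR, of "map_poly emb"] by (simp add: mp_add mp_mult G)
  hence "P dvd map_poly emb R" using P_dvd by (metis dvd_diff dvd_triv_right)
  have "R = 0"
  proof (rule ccontr)
    assume "R \<noteq> 0"
    hence "degree R < degree G" using degree_mod_less[OF G_ne0, of X] by (simp add: R_def)
    moreover have "degree P \<le> degree (map_poly emb R)"
      using \<open>P dvd map_poly emb R\<close> \<open>R \<noteq> 0\<close> G_ne0 G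
      by (intro dvd_imp_degree) (auto simp: mp_eq0)
    ultimately show False using G degree_mp[of G] degree_mp[of R] by simp
  qed
  thus ?thesis by (simp add: R_def mod_eq_0_iff_dvd)
qed

end

context cyc begin

lemma vs: "vector_space (smult :: 'a \<Rightarrow> 'a poly \<Rightarrow> 'a poly)"
  by unfold_locales (simp_all add: smult_add_right smult_add_left)

lemma dim_code: "code_dim (cyclic_code n G) = n - card Z"
proof -
  interpret vs: vector_space "smult :: 'a \<Rightarrow> 'a poly \<Rightarrow> 'a poly" by (rule vs)
  define k where "k = n - card Z"
  define f where "f = (\<lambda>i. monom (1::'a) i * G)"
  define B where "B = f ` {..<k}"
  have degf: "degree (f i) = i + card Z" for i
    unfolding f_def using G_ne0 degG by (simp add: degree_mult_eq degree_monom_eq)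
  have injf: "inj_on f {..<k}"
    by (rule inj_onI) (metis degf add_right_cancel)
  have cardB: "card B = k" unfolding B_def by (simp add: card_image[OF injf])
  define C where "C = cyclic_code n G"
  have BC: "B \<subseteq> C"
  proof
    fix v assume "v \<in> B"
    then obtain i where i: "i < k" "v = f i" by (auto simp: B_def)
    have "degree v < degree X" using i degf degX cardZ by (simp add: k_def)
    hence "v = (monom 1 i * G) mod X" by (simp add: mod_poly_less i f_def)
    thus "v \<in> C" by (auto simp: C_def cyclic_code_def X_def)
  qed
  have CB: "C \<subseteq> vs.span B"
  proof
    fix c assume "c \<in> C"
    then obtain a where a: "c = (a * G) mod X" by (auto simp: C_def cyclic_code_def X_def)
    obtain h where h: "X = h * G" using G_dvd by (metis dvd_def mult.commute)
    have h0: "h \<noteq> 0" using h degX n_gt1 by auto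
    have degh: "degree h = k" using h degX degG G_ne0 h0 by (simp add: degree_mult_eq k_def)
    define b where "b = a mod h"
    have cb: "c = b * G" by (simp add: a h b_def mod_mult_mult2)
    have degb: "degree b < k \<or> b = 0"
      using degree_mod_less[OF h0, of a] degh by (auto simp: b_def)
    have bsum: "b = (\<Sum>i<k. monom (coeff b i) i)"
    proof (cases "b = 0")
      case True thus ?thesis by simp
    next
      case False
      hence "degree b < k" using degb by simp
      hence "(\<Sum>i\<le>k - 1. monom (coeff b i) i) = b" by (intro poly_as_sum_of_monoms') auto
      moreover have "{..k - 1} = {..<k}" using \<open>degree b < k\<close> by auto
      ultimately show ?thesis by simp
    qed
    have "c = (\<Sum>i<k. monom (coeff b i) i) * G" using cb bsum by metis
    also have "\<dots> = (\<Sum>i<k. smult (coeff b i) (f i))"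
      by (simp add: sum_distrib_right f_def smult_monom flip: mult_smult_left)
    also have "\<dots> \<in> vs.span B"
      by (intro vs.span_sum vs.span_scale vs.span_base) (auto simp: B_def)
    finally show "c \<in> vs.span B" .
  qed
  have indep: "vs.independent B"
  proof
    assume "vs.dependent B"
    then obtain t u where t: "finite t" "t \<subseteq> B" "(\<Sum>v\<in>t. smult (u v) v) = 0" "\<exists>v\<in>t. u v \<noteq> 0"
      unfolding vs.dependent_explicit by blast
    define I where "I = {i. i < k \<and> f i \<in> t}"
    have tI: "t = f ` I" using t(2) by (auto simp: I_def B_def)
    have injI: "inj_on f I" using injf by (rule inj_on_subset) (auto simp: I_def)
    have "0 = (\<Sum>i\<in>I. smult (u (f i)) (f i))"
      using t(3) by (simp add: tI sum.reindex[OF injI])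
    also have "\<dots> = (\<Sum>i\<in>I. monom (u (f i)) i) * G"
      by (simp add: sum_distrib_right f_def smult_monom flip: mult_smult_left)
    finally have "(\<Sum>i\<in>I. monom (u (f i)) i) = 0" using G_ne0 by simp
    hence cz: "coeff (\<Sum>i\<in>I. monom (u (f i)) i) j = 0" for j by simp
    obtain v where v: "v \<in> t" "u v \<noteq> 0" using t(4) by blast
    then obtain j where j: "j \<in> I" "v = f j" using tI by auto
    have fin: "finite I" by (auto simp: I_def)
    have "coeff (\<Sum>i\<in>I. monom (u (f i)) i) j = u (f j)"
      using j fin by (simp add: coeff_sum coeff_monom)
    with cz v j show False by simp
  qed
  have "vs.dim C = k" by (rule vs.dim_unique[OF BC CB indep cardB])
  thus ?thesis unfolding code_dim_def C_def k_def .
qed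

end

context cyc begin

lemma poly_P_zero: "k \<in> Z \<Longrightarrow> poly P (theta ^ k) = 0"
  unfolding P_def using finZ by (simp add: poly_prod) (metis right_minus_eq)

lemma P1: "poly P 1 \<noteq> 0"
proof -
  have "theta ^ k \<noteq> 1" if "k \<in> Z" for k using theta_prim that Z_sub by auto
  thus ?thesis unfolding P_def using finZ by (auto simp: poly_prod)
qed

lemma X_ne0: "X \<noteq> 0" using degX n_gt1 by auto

lemma weight_bound:
  assumes mult: "\<And>m. 0 < m \<Longrightarrow> m < n \<Longrightarrow> m \<in> Z \<or> (a * m) mod n \<in> Z"
    and cC: "c \<in> cyclic_code n G" and odd: "odd_like n c"
  shows "n \<le> hamming_wt n c ^ 2"
    and "a = n - 1 \<Longrightarrow> n \<le> hamming_wt n c ^ 2 - hamming_wt n c + 1"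
proof -
  obtain b where cdef: "c = (b * G) mod X" using cC by (auto simp: cyclic_code_def X_def)
  have c0: "c \<noteq> 0" using odd by (auto simp: odd_like_def)
  have degc: "degree c < n" using degree_mod_less[OF X_ne0, of "b * G"] c0 degX by (simp add: cdef)
  define S where "S = {i. i < n \<and> coeff c i \<noteq> 0}"
  define w where "w = card S"
  have wdef: "hamming_wt n c = w" by (simp add: hamming_wt_def w_def S_def)
  have finS: "finite S" by (auto simp: S_def)
  define e where "e = (\<lambda>i. emb (coeff c i))"
  define Cv where "Cv = (\<lambda>x. poly (map_poly emb c) x)"
  have Cv_sum: "Cv x = (\<Sum>i\<in>S. e i * x ^ i)" for x
  proof -
    have "Cv x = (\<Sum>i<n. coeff (map_poly emb c) i * x ^ i)"
      unfolding Cv_def by (rule poly_sum_lt) (simp add: degree_mp degc)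
    also have "\<dots> = (\<Sum>i<n. e i * x ^ i)" by (simp add: coeff_mp e_def)
    also have "\<dots> = (\<Sum>i\<in>S. e i * x ^ i)"
      by (rule sum.mono_neutral_right) (auto simp: S_def e_def zero)
    finally show ?thesis .
  qed
  have Cv_zero: "Cv (theta ^ k) = 0" if "k \<in> Z" for k
  proof -
    have "b * G = (b * G div X) * X + c" by (simp add: cdef)
    hence "map_poly emb b * P = map_poly emb (b * G div X) * map_poly emb X + map_poly emb c"
      by (metis G mp_add mp_mult)
    hence "poly (map_poly emb b * P) (theta ^ k) =
           poly (map_poly emb (b * G div X) * map_poly emb X + map_poly emb c) (theta ^ k)" by simp
    thus ?thesis using poly_P_zero[OF that] poly_mapX_theta[of k] by (simp add: Cv_def)
  qed
  have Cv_mod: "Cv (theta ^ m) = Cv (theta ^ (m mod n))" for m by (simp flip: theta_mod)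
  have Cv1: "Cv 1 \<noteq> 0"
  proof -
    have "Cv 1 = (\<Sum>i<n. coeff (map_poly emb c) i * 1 ^ i)"
      unfolding Cv_def by (rule poly_sum_lt) (simp add: degree_mp degc)
    also have "\<dots> = emb (\<Sum>i<n. coeff c i)" by (simp add: sum coeff_mp)
    finally show ?thesis using odd by (simp add: odd_like_def eq0)
  qed
  define f where "f = (\<lambda>(i::nat, j::nat). (i + a * j) mod n)"
  define gg where "gg = (\<lambda>(i::nat, j::nat). e i * e j)"
  define Pt where "Pt = (\<lambda>t. \<Sum>x\<in>S \<times> S. if f x = t then gg x else 0)"
  define F where "F = (\<lambda>m. \<Sum>t<n. Pt t * theta ^ (m * t))"
  have f_lt: "f x < n" for x using n_gt1 by (auto simp: f_def split: prod.splits)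
  have F_eq: "F m = Cv (theta ^ m) * Cv (theta ^ (m * a))" for m
  proof -
    have "F m = (\<Sum>t<n. \<Sum>x\<in>S \<times> S. if f x = t then gg x * theta ^ (m * t) else 0)"
      unfolding F_def Pt_def sum_distrib_right by (intro sum.cong refl) simp
    also have "\<dots> = (\<Sum>x\<in>S \<times> S. \<Sum>t<n. if f x = t then gg x * theta ^ (m * t) else 0)"
      by (rule sum.swap)
    also have "\<dots> = (\<Sum>x\<in>S \<times> S. gg x * theta ^ (m * f x))"
      using f_lt by (simp add: if_distrib cong: if_cong) 
    also have "\<dots> = (\<Sum>x\<in>S \<times> S. (e (fst x) * (theta ^ m) ^ fst x) * (e (snd x) * (theta ^ (m * a)) ^ snd x))"
    proof (intro sum.cong refl)
      fix x :: "nat \<times> nat"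
      obtain i j where x: "x = (i, j)" by (cases x)
      have "theta ^ (m * f x) = theta ^ (m * (i + a * j))"
        by (subst (1 2) theta_mod) (simp add: f_def x mod_mult_right_eq)
      also have "\<dots> = (theta ^ m) ^ i * (theta ^ (m * a)) ^ j"
        by (simp add: algebra_simps flip: power_mult power_add)
      finally show "gg x * theta ^ (m * f x) = (e (fst x) * (theta ^ m) ^ fst x) * (e (snd x) * (theta ^ (m * a)) ^ snd x)"
        by (simp add: gg_def x algebra_simps)
    qed
    also have "\<dots> = Cv (theta ^ m) * Cv (theta ^ (m * a))"
      by (simp add: Cv_sum sum_product sum.cartesian_product case_prod_beta)
    finally show ?thesis .
  qed
  have F_zero: "F m = 0" if "0 < m" "m < n" for m
  proof -
    from mult[OF that] show ?thesis
    proof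
      assume "m \<in> Z" thus ?thesis by (simp add: F_eq Cv_zero)
    next
      assume "(a * m) mod n \<in> Z"
      hence "Cv (theta ^ (m * a)) = 0" by (subst Cv_mod) (simp add: Cv_zero mult.commute)
      thus ?thesis by (simp add: F_eq)
    qed
  qed
  have F0: "F 0 \<noteq> 0" using Cv1 by (simp add: F_eq)
  have inv: "of_nat n * Pt t = F 0" if "t < n" for t
  proof -
    have geo: "(\<Sum>m<n. theta ^ (m * (n - t + s))) = (if s = t then of_nat n else 0)" if "s < n" for s
    proof (cases "s = t")
      case True
      have "theta ^ (m * (n - t + s)) = 1" for m using True \<open>t < n\<close>
        by (simp add: power_mult theta_n) (metis mult.commute power_mult power_one theta_n)
      thus ?thesis using True by simp
    next
      case False
      define om where "om = theta ^ (n - t + s)"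
      have "(n - t + s) mod n \<noteq> 0"
      proof
        assume "(n - t + s) mod n = 0"
        moreover have "n - t + s > 0" "n - t + s < 2 * n" using \<open>t < n\<close> \<open>s < n\<close> by auto
        ultimately have "n - t + s = n"
        proof -
          assume m0: "(n - t + s) mod n = 0" and pos: "n - t + s > 0" "n - t + s < 2 * n"
          obtain k where k: "n - t + s = n * k" using m0 by (auto elim: dvdE simp: mod_eq_0_iff_dvd)
          have "n * k < n * 2" using pos k by (simp add: mult.commute)
          hence "k < 2" by simp
          moreover have "k \<noteq> 0" using pos k by auto
          ultimately have "k = 1" by simp
          thus ?thesis using k by simp
        qed
        thus False using False \<open>t < n\<close> by auto
      qed
      hence om1: "om \<noteq> 1" by (simp add: om_def theta_eq1_iff)
      have omn: "om ^ n = 1" unfolding om_def by (metis mult.commute power_mult power_one theta_n)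
      have "(\<Sum>m<n. theta ^ (m * (n - t + s))) = (\<Sum>m<n. om ^ m)"
        by (intro sum.cong refl) (simp add: om_def flip: power_mult, simp add: mult.commute)
      also have "\<dots> = 0" using om1 omn by (simp add: geometric_sum)
      finally show ?thesis using False by simp
    qed
    have "(\<Sum>m<n. theta ^ (m * (n - t)) * F m) = (\<Sum>m<n. \<Sum>s<n. Pt s * theta ^ (m * (n - t + s)))"
      unfolding F_def sum_distrib_left
    proof (intro sum.cong refl)
      fix m s
      have "theta ^ (m * (n - t + s)) = theta ^ (m * (n - t)) * theta ^ (m * s)"
        by (simp add: add_mult_distrib2 power_add)
      thus "theta ^ (m * (n - t)) * (Pt s * theta ^ (m * s)) = Pt s * theta ^ (m * (n - t + s))"
        by simp
    qed
    also have "\<dots> = (\<Sum>s<n. \<Sum>m<n. Pt s * theta ^ (m * (n - t + s)))" by (rule sum.swap)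
    also have "\<dots> = (\<Sum>s<n. Pt s * (\<Sum>m<n. theta ^ (m * (n - t + s))))"
      by (simp add: sum_distrib_left)
    also have "\<dots> = (\<Sum>s<n. if s = t then Pt s * of_nat n else 0)"
      by (intro sum.cong refl) (simp add: geo)
    also have "\<dots> = of_nat n * Pt t" using that by (simp add: mult.commute)
    finally have lhs: "(\<Sum>m<n. theta ^ (m * (n - t)) * F m) = of_nat n * Pt t" .
    have "{..<n} = insert 0 {1..<n}" using n_gt1 by auto
    hence "(\<Sum>m<n. theta ^ (m * (n - t)) * F m) = F 0 + (\<Sum>m\<in>{1..<n}. theta ^ (m * (n - t)) * F m)"
      by simp
    also have "(\<Sum>m\<in>{1..<n}. theta ^ (m * (n - t)) * F m) = 0" by (intro sum.neutral) (auto simp: F_zero)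
    finally show ?thesis using lhs by simp
  qed
  have cover: "{..<n} \<subseteq> f ` (S \<times> S)"
  proof
    fix t assume "t \<in> {..<n}"
    hence "Pt t \<noteq> 0" using inv[of t] F0 by auto
    show "t \<in> f ` (S \<times> S)"
    proof (rule ccontr)
      assume "t \<notin> f ` (S \<times> S)"
      hence "Pt t = 0" unfolding Pt_def by (intro sum.neutral) force
      with \<open>Pt t \<noteq> 0\<close> show False by simp
    qed
  qed
  have "n \<le> card (f ` (S \<times> S))"
    using card_mono[OF _ cover] finS by simp
  also have "\<dots> \<le> card (S \<times> S)" by (rule card_image_le) (simp add: finS)
  also have "\<dots> = w ^ 2" by (simp add: w_def card_cartesian_product power2_eq_square)
  finally show "n \<le> hamming_wt n c ^ 2" by (simp add: wdef)
  assume an: "a = n - 1"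
  define Dg where "Dg = (\<lambda>i. (i, i)) ` S"
  have fD: "f x = 0" if xD: "x \<in> Dg" for x
  proof -
    obtain i where "x = (i, i)" using xD by (auto simp: Dg_def)
    moreover have "i + (n - 1) * i = n * i" using n_gt1 by (simp add: algebra_simps)
    ultimately show ?thesis by (simp add: f_def an)
  qed
  have DgS: "Dg \<subseteq> S \<times> S" by (auto simp: Dg_def)
  have cardDg: "card Dg = w" unfolding Dg_def w_def by (rule card_image) (auto simp: inj_on_def)
  have "f ` (S \<times> S) \<subseteq> insert 0 (f ` (S \<times> S - Dg))" using fD by auto
  hence "card (f ` (S \<times> S)) \<le> card (insert 0 (f ` (S \<times> S - Dg)))"
    by (intro card_mono) (auto simp: finS)
  also have "\<dots> \<le> Suc (card (f ` (S \<times> S - Dg)))" by (rule card_insert_le_m1) (auto simp: finS)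
  also have "card (f ` (S \<times> S - Dg)) \<le> card (S \<times> S - Dg)" by (rule card_image_le) (simp add: finS)
  also have "card (S \<times> S - Dg) = w * w - w"
    using card_Diff_subset[OF finite_subset[OF DgS] DgS] finS cardDg
    by (simp add: card_cartesian_product w_def)
  finally have "card (f ` (S \<times> S)) \<le> w * w - w + 1" by simp
  with cover have "n \<le> w * w - w + 1" using card_mono[OF _ cover] finS by fastforce
  thus "n \<le> hamming_wt n c ^ 2 - hamming_wt n c + 1" by (simp add: wdef power2_eq_square)
qed

end

context cyc begin

lemma G_in: "G \<in> cyclic_code n G"
proof -
  have "G = (1 * G) mod X" using degG cardZ degX by (simp add: mod_poly_less)
  thus ?thesis unfolding cyclic_code_def X_def by blast
qed

lemma G_odd: "odd_like n G"
proof -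
  have "emb (\<Sum>i<n. coeff G i) = (\<Sum>i<n. coeff P i * 1 ^ i)"
    by (simp add: sum coeff_mp flip: G)
  also have "\<dots> = poly P 1" by (rule poly_sum_lt[symmetric]) (simp add: degP cardZ)
  finally show ?thesis using P1 by (auto simp: odd_like_def zero)
qed

lemma min_bounds:
  assumes mult: "\<And>m. 0 < m \<Longrightarrow> m < n \<Longrightarrow> m \<in> Z \<or> (a * m) mod n \<in> Z"
  shows "n \<le> min_odd_like_weight n (cyclic_code n G) ^ 2"
    and "a = n - 1 \<Longrightarrow> n \<le> min_odd_like_weight n (cyclic_code n G) ^ 2 - min_odd_like_weight n (cyclic_code n G) + 1"
proof -
  define W where "W = {hamming_wt n c | c. c \<in> cyclic_code n G \<and> odd_like n c}"
  have hw: "hamming_wt n c \<le> n" for c :: "'a poly"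
  proof -
    have "card {i. i < n \<and> coeff c i \<noteq> 0} \<le> card {..<n}" by (rule card_mono) auto
    thus ?thesis by (simp add: hamming_wt_def)
  qed
  have "W \<subseteq> {..n}" using hw by (auto simp: W_def)
  hence finW: "finite W" by (rule finite_subset) simp
  have "W \<noteq> {}" using G_in G_odd by (auto simp: W_def)
  hence "Min W \<in> W" using finW by (rule_tac Min_in) auto
  then obtain c where c: "c \<in> cyclic_code n G" "odd_like n c" "min_odd_like_weight n (cyclic_code n G) = hamming_wt n c"
    by (auto simp: W_def min_odd_like_weight_def)
  show "n \<le> min_odd_like_weight n (cyclic_code n G) ^ 2"
    using weight_bound(1)[OF mult c(1,2)] c(3) by simp
  assume "a = n - 1"
  thus "n \<le> min_odd_like_weight n (cyclic_code n G) ^ 2 - min_odd_like_weight n (cyclic_code n G) + 1"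
    using weight_bound(2)[OF mult c(1,2)] c(3) by simp
qed

end

lemma leg_range: "Legendre a p \<in> {-1, 0, 1}" by (simp add: Legendre_def)

lemma leg_zero_iff: "Legendre a p = 0 \<longleftrightarrow> [a = 0] (mod p)" by (simp add: Legendre_def)

lemma leg_cong:
  assumes "[a = b] (mod p)"
  shows "Legendre a p = Legendre b p"
proof -
  have "[a = 0] (mod p) \<longleftrightarrow> [b = 0] (mod p)" using assms by (meson cong_sym cong_trans)
  moreover have "QuadRes p a \<longleftrightarrow> QuadRes p b" unfolding QuadRes_def using assms
    by (meson cong_sym cong_trans)
  ultimately show ?thesis by (simp add: Legendre_def)
qed

lemma leg_one: "p > 1 \<Longrightarrow> Legendre 1 p = 1"
proof -
  assume "p > 1"
  hence "\<not> [1 = 0] (mod p)" by (simp add: cong_def)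
  moreover have "QuadRes p 1" unfolding QuadRes_def by (rule exI[of _ 1]) simp
  ultimately show ?thesis by (simp add: Legendre_def)
qed

lemma small_cong_eq:
  fixes x y :: int and p :: nat
  assumes "prime p" "p > 2" "x \<in> {-1, 0, 1}" "y \<in> {-1, 0, 1}" "[x = y] (mod int p)"
  shows "x = y"
proof -
  have "int p dvd (x - y)" using assms(5) by (simp add: cong_iff_dvd_diff)
  moreover have "\<bar>x - y\<bar> < int p" using assms(2,3,4) by auto
  ultimately show ?thesis
  proof (cases "x = y")
    case False
    hence "\<bar>int p\<bar> \<le> \<bar>x - y\<bar>" using \<open>int p dvd (x - y)\<close> by (intro dvd_imp_le_int) auto
    with \<open>\<bar>x - y\<bar> < int p\<close> show ?thesis by simp
  qed
qed

lemma leg_mult: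
  assumes "prime p" "p > 2"
  shows "Legendre (a * b) (int p) = Legendre a (int p) * Legendre b (int p)"
proof -
  have pr: "prime (int p)" using assms by simp
  have h: "[Legendre x (int p) = x ^ ((p - 1) div 2)] (mod int p)" for x
    using euler_criterion[OF assms] by simp
  have "[Legendre (a * b) (int p) = (a * b) ^ ((p - 1) div 2)] (mod int p)" by (rule h)
  also have "(a * b) ^ ((p - 1) div 2) = a ^ ((p - 1) div 2) * b ^ ((p - 1) div 2)"
    by (simp add: power_mult_distrib)
  also have "[\<dots> = Legendre a (int p) * Legendre b (int p)] (mod int p)"
    by (intro cong_mult; rule cong_sym; rule h)
  finally have c: "[Legendre (a * b) (int p) = Legendre a (int p) * Legendre b (int p)] (mod int p)" .
  have "Legendre a (int p) * Legendre b (int p) \<in> {-1, 0, 1}"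
    using leg_range[of a "int p"] leg_range[of b "int p"] by auto
  thus ?thesis using small_cong_eq[OF assms leg_range _ c] by simp
qed

lemma leg_primroot:
  assumes "prime p" "p > 2" "residue_primroot p r"
  shows "Legendre (int r) (int p) = -1"
proof -
  have pr: "prime (int p)" using assms by simp
  define h where "h = (p - 1) div 2"
  have e: "[Legendre (int r) (int p) = int r ^ h] (mod int p)"
    using euler_criterion[OF assms(1,2)] by (simp add: h_def)
  have cop: "coprime p r" using assms(3) by (simp add: residue_primroot_def)
  have ordr: "ord p r = p - 1" using assms by (simp add: residue_primroot_def totient_prime)
  have "\<not> [r = 0] (mod p)"
  proof
    assume "[r = 0] (mod p)"
    hence "p dvd r" by (simp add: cong_0_iff)
    hence "is_unit p" using coprime_common_divisor[OF cop dvd_refl] by blast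
    with assms(1) show False by simp
  qed
  hence "\<not> [int r = 0] (mod int p)" by (metis cong_int_iff of_nat_0)
  hence "Legendre (int r) (int p) \<noteq> 0" by (simp add: leg_zero_iff)
  moreover have "Legendre (int r) (int p) \<noteq> 1"
  proof
    assume "Legendre (int r) (int p) = 1"
    hence "[int r ^ h = 1] (mod int p)" using e by (metis cong_sym)
    hence "[r ^ h = 1] (mod p)" by (metis cong_int_iff of_nat_1 of_nat_power)
    moreover have "0 < h" "h < ord p r" using assms by (auto simp: h_def ordr)
    ultimately show False using ord_minimal by blast
  qed
  ultimately show ?thesis using leg_range[of "int r" "int p"] by auto
qed

lemma leg_minus1:
  assumes "prime p" "p mod 4 = 3"
  shows "Legendre (-1) (int p) = -1"
proof -
  have p2: "p > 2"
  proof (rule ccontr)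
    assume "\<not> p > 2"
    hence "p = 0 \<or> p = 1 \<or> p = 2" by auto
    thus False using assms(2) by auto
  qed
  have pr: "prime (int p)" using assms by simp
  define h where "h = (p - 1) div 2"
  define k where "k = p div 4"
  have pk: "p = 4 * k + 3" using assms(2) unfolding k_def by (metis mod_mult_div_eq add.commute)
  have "h = 2 * k + 1" unfolding h_def pk by simp
  hence oh: "odd h" by simp
  have e: "[Legendre (-1) (int p) = (-1) ^ h] (mod int p)"
    using euler_criterion[OF assms(1) p2] by (simp add: h_def)
  hence "[Legendre (-1) (int p) = -1] (mod int p)" using oh by simp
  thus ?thesis using small_cong_eq[OF assms(1) p2 leg_range] by simp
qed

lemma Vset_memI:
  "s < e \<Longrightarrow> k < d \<Longrightarrow> (s + k) mod 2 = i \<Longrightarrow> (g ^ s * nu ^ k) mod n \<in> Vset n g nu d e i"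
  unfolding Vset_def by blast

lemma U_tot:
  assumes "m > (1::nat)"
  shows "{x. x < m \<and> coprime x m} = totatives m"
proof (intro equalityI subsetI)
  fix x assume "x \<in> {x. x < m \<and> coprime x m}"
  hence x: "x < m" "coprime x m" by simp_all
  have g1: "gcd x m = 1" using x(2) using coprime_iff_gcd_eq_1 by blast
  have "x \<noteq> 0"
  proof
    assume "x = 0"
    hence "gcd x m = m" by simp
    with g1 assms show False by simp
  qed
  thus "x \<in> totatives m" using x by (simp add: totatives_def)
next
  fix x assume "x \<in> totatives m"
  hence x: "0 < x" "x \<le> m" "coprime x m" by (simp_all add: totatives_def)
  have g1: "gcd x m = 1" using x(3) using coprime_iff_gcd_eq_1 by blast
  have "x \<noteq> m"
  proof
    assume "x = m"
    hence "gcd x m = m" by simp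
    with g1 assms show False by simp
  qed
  thus "x \<in> {x. x < m \<and> coprime x m}" using x by simp
qed

locale nt =
  fixes n1 n2 g1 g2 g nu :: nat
  assumes p1: "prime n1" and p2: "prime n2" and o1: "odd n1" and o2: "odd n2" and ne: "n1 \<noteq> n2"
    and r1: "residue_primroot n1 g1" and r2: "residue_primroot n2 g2"
    and gc1: "[g = g1] (mod n1)" and gc2: "[g = g2] (mod n2)"
    and nc1: "[nu = g] (mod n1)" and nc2: "[nu = 1] (mod n2)"
begin

abbreviation "n \<equiv> n1 * n2"
abbreviation "d \<equiv> gcd (n1 - 1) (n2 - 1)"
abbreviation "e \<equiv> (n1 - 1) * (n2 - 1) div gcd (n1 - 1) (n2 - 1)"
abbreviation L where "L x \<equiv> Legendre (int x) (int n1)"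
abbreviation M where "M x \<equiv> Legendre (int x) (int n2)"
definition sg :: "nat \<Rightarrow> int" where "sg i = (if i = 0 then 1 else -1)"
definition Lset where "Lset i = {x. x < n \<and> coprime x n \<and> L x = sg i}"
definition U where "U = {x. x < n \<and> coprime x n}"

lemma n1_gt2: "n1 > 2" using p1 o1 prime_ge_2_nat[OF p1] by (cases "n1 = 2") auto
lemma n2_gt2: "n2 > 2" using p2 o2 prime_ge_2_nat[OF p2] by (cases "n2 = 2") auto
lemma n_gt1: "n > 1" using n1_gt2 n2_gt2 by (simp add: one_less_mult)
lemma n_pos: "n > 0" using n1_gt2 n2_gt2 by simp
lemma n1i: "int n1 > 1" using n1_gt2 by simp
lemma n2i: "int n2 > 1" using n2_gt2 by simp
lemma cop12: "coprime n1 n2" using primes_coprime[OF p1 p2 ne] .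

lemma L_cong: "[x = y] (mod n1) \<Longrightarrow> L x = L y"
  by (rule leg_cong) (simp add: cong_int_iff)
lemma M_cong: "[x = y] (mod n2) \<Longrightarrow> M x = M y"
  by (rule leg_cong) (simp add: cong_int_iff)

lemma L_mod: "L (x mod n) = L x"
proof (rule L_cong)
  have "[x mod n = x] (mod n)" by (simp only: cong_def mod_mod_trivial)
  thus "[x mod n = x] (mod n1)" by (rule cong_modulus_mult_nat)
qed
lemma M_mod: "M (x mod n) = M x"
proof (rule M_cong)
  have "[x mod n = x] (mod n2 * n1)" by (simp only: cong_def mod_mod_trivial mult.commute)
  thus "[x mod n = x] (mod n2)" by (rule cong_modulus_mult_nat)
qed

lemma L_mult: "L (x * y) = L x * L y" using leg_mult[OF p1 n1_gt2] by simp
lemma M_mult: "M (x * y) = M x * M y" using leg_mult[OF p2 n2_gt2] by simp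
lemma L_mult': "Legendre (a * b) (int n1) = Legendre a (int n1) * Legendre b (int n1)"
  using leg_mult[OF p1 n1_gt2] by simp
lemma M_mult': "Legendre (a * b) (int n2) = Legendre a (int n2) * Legendre b (int n2)"
  using leg_mult[OF p2 n2_gt2] by simp
lemma L_pow': "Legendre (a ^ m) (int n1) = Legendre a (int n1) ^ m"
  by (induction m) (simp_all add: leg_mult[OF p1 n1_gt2] leg_one[OF n1i])
lemma M_pow': "Legendre (a ^ m) (int n2) = Legendre a (int n2) ^ m"
  by (induction m) (simp_all add: leg_mult[OF p2 n2_gt2] leg_one[OF n2i])
lemma L_pow: "L (x ^ m) = L x ^ m" by (induction m) (simp_all add: leg_mult[OF p1 n1_gt2] leg_one[OF n1i])
lemma M_pow: "M (x ^ m) = M x ^ m" by (induction m) (simp_all add: leg_mult[OF p2 n2_gt2] leg_one[OF n2i])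

lemma L_g: "L g = -1" using L_cong[OF gc1] leg_primroot[OF p1 n1_gt2 r1] by simp
lemma M_g: "M g = -1" using M_cong[OF gc2] leg_primroot[OF p2 n2_gt2 r2] by simp
lemma L_nu: "L nu = -1" using L_cong[OF nc1] L_g by simp
lemma M_nu: "M nu = 1" using M_cong[OF nc2] leg_one[of "int n2"] n2_gt2 by simp

lemma cop_g: "coprime g n"
proof -
  have "coprime g1 n1" using r1 by (simp add: residue_primroot_def coprime_commute)
  hence "coprime g n1" using gc1 by (meson cong_imp_coprime cong_sym)
  moreover have "coprime g2 n2" using r2 by (simp add: residue_primroot_def coprime_commute)
  hence "coprime g n2" using gc2 by (meson cong_imp_coprime cong_sym)
  ultimately show ?thesis by simp
qed

lemma cop_nu: "coprime nu n"
proof -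
  have "coprime g n1" using cop_g by simp
  hence "coprime nu n1" using nc1 by (meson cong_imp_coprime cong_sym)
  moreover have "coprime nu n2" by (rule cong_imp_coprime[OF cong_sym[OF nc2]]) simp
  ultimately show ?thesis by simp
qed

lemma cop_phi: "coprime ((g ^ s * nu ^ k) mod n) n"
proof -
  have "coprime (g ^ s * nu ^ k) n" using cop_g cop_nu
    by (simp del: coprime_mult_right_iff add: coprime_power_left_iff)
  thus ?thesis using n_pos by (simp del: coprime_mult_right_iff)
qed

lemma V_sub: "i \<in> {0, 1} \<Longrightarrow> Vset n g nu d e i \<subseteq> Lset i"
proof
  fix x assume i: "i \<in> {0, 1}" and "x \<in> Vset n g nu d e i"
  then obtain s k where x: "x = (g ^ s * nu ^ k) mod n" and sk: "(s + k) mod 2 = i"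
    by (auto simp: Vset_def)
  have "x < n" using x n_pos by simp
  moreover have "coprime x n" using x cop_phi by simp
  moreover have "L x = (-1) ^ (s + k)" by (simp add: x L_mod L_mult' L_pow' L_g L_nu power_add)
  hence "L x = sg i" using sk i by (auto simp: sg_def minus_one_power_iff)
  ultimately show "x \<in> Lset i" by (simp add: Lset_def)
qed

lemma lcm_e: "lcm (n1 - 1) (n2 - 1) = e"
proof -
  have "gcd (n1 - 1) (n2 - 1) \<noteq> 0" using n1_gt2 by simp
  moreover have "(n1 - 1) * (n2 - 1) = gcd (n1 - 1) (n2 - 1) * lcm (n1 - 1) (n2 - 1)" by (rule prod_gcd_lcm_nat)
  ultimately show ?thesis by (metis nonzero_mult_div_cancel_left)
qed

lemma ed: "e * d = (n1 - 1) * (n2 - 1)"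
  by (rule dvd_div_mult_self[OF dvd_mult2[OF gcd_dvd1]])

lemma ord1: "ord n1 g1 = n1 - 1" using r1 p1 by (simp add: residue_primroot_def totient_prime)
lemma ord2: "ord n2 g2 = n2 - 1" using r2 p2 by (simp add: residue_primroot_def totient_prime)

definition phi where "phi = (\<lambda>(s, k). (g ^ s * nu ^ k) mod n)"

lemma phi_inj_aux:
  assumes s: "s < e" "s' < e" and k: "k < d" "k' < d" and eq: "phi (s, k) = phi (s', k')"
  shows "s = s' \<and> k = k'"
proof -
  have c: "[g ^ s * nu ^ k = g ^ s' * nu ^ k'] (mod n)" using eq by (simp add: phi_def cong_def)
  have c1: "[g ^ s * nu ^ k = g ^ s' * nu ^ k'] (mod n1)" using c by (rule cong_modulus_mult_nat)
  have c2: "[g ^ s * nu ^ k = g ^ s' * nu ^ k'] (mod n2)"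
    using cong_modulus_mult_nat[of "g ^ s * nu ^ k" "g ^ s' * nu ^ k'" n2 n1] c by (simp only: mult.commute)
  have a2: "[g ^ s * nu ^ k = g2 ^ s] (mod n2)" for s k
    using cong_mult[OF cong_pow[OF gc2, of s] cong_pow[OF nc2, of k]] by simp
  have "[g2 ^ s = g2 ^ s'] (mod n2)" by (rule cong_trans[OF cong_trans[OF cong_sym[OF a2] c2] a2])
  hence m2: "[s = s'] (mod n2 - 1)"
    using order_divides_expdiff[of n2 g2] r2 by (simp add: residue_primroot_def ord2)
  have a1: "[g ^ s * nu ^ k = g1 ^ (s + k)] (mod n1)" for s k
  proof -
    have "[g ^ s * nu ^ k = g1 ^ s * g1 ^ k] (mod n1)"
      by (intro cong_mult cong_pow gc1) (rule cong_trans[OF nc1 gc1])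
    thus ?thesis by (simp add: power_add)
  qed
  have "[g1 ^ (s + k) = g1 ^ (s' + k')] (mod n1)" by (rule cong_trans[OF cong_trans[OF cong_sym[OF a1] c1] a1])
  hence m1: "[s + k = s' + k'] (mod n1 - 1)"
    using order_divides_expdiff[of n1 g1] r1 by (simp add: residue_primroot_def ord1)
  have sd: "[s = s'] (mod d)" using m2 by (rule cong_dvd_modulus_nat) simp
  have skd: "[s + k = s' + k'] (mod d)" using m1 by (rule cong_dvd_modulus_nat) simp
  have "[s' + k' = s + k'] (mod d)" by (intro cong_add cong_sym[OF sd] cong_refl)
  hence "[s + k = s + k'] (mod d)" by (rule cong_trans[OF skd])
  hence "[k = k'] (mod d)" by (simp add: cong_add_lcancel_nat)
  hence kk: "k = k'" using k by (simp add: cong_def)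
  hence "[s = s'] (mod n1 - 1)" using m1 by (simp add: cong_add_rcancel_nat)
  hence "[s = s'] (mod lcm (n1 - 1) (n2 - 1))" using m2 by (rule cong_cong_lcm_nat)
  hence "s mod e = s' mod e" by (simp only: lcm_e cong_def)
  moreover have "s mod e = s" "s' mod e = s'" using s by simp_all
  ultimately have "s = s'" by simp
  thus "s = s' \<and> k = k'" using kk by simp
qed

lemma phi_inj: "inj_on phi ({..<e} \<times> {..<d})"
proof (rule inj_onI)
  fix x y assume x: "x \<in> {..<e} \<times> {..<d}" and y: "y \<in> {..<e} \<times> {..<d}" and eq: "phi x = phi y"
  obtain s k where sk: "x = (s, k)" by (cases x)
  obtain s' k' where sk': "y = (s', k')" by (cases y)
  have "s < e" "k < d" using x sk by auto
  moreover have "s' < e" "k' < d" using y sk' by auto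
  ultimately have "s = s' \<and> k = k'" using phi_inj_aux eq sk sk' by blast
  thus "x = y" using sk sk' by simp
qed

lemma card_U: "card U = (n1 - 1) * (n2 - 1)"
proof -
  have "U = totatives n" unfolding U_def by (rule U_tot[OF n_gt1])
  hence "card U = totient n" by (simp add: totient_def)
  also have "\<dots> = (n1 - 1) * (n2 - 1)" by (simp add: totient_mult_coprime cop12 totient_prime p1 p2)
  finally show ?thesis .
qed

lemma phi_image: "phi ` ({..<e} \<times> {..<d}) = U"
proof (rule card_subset_eq)
  show "finite U" by (simp add: U_def)
  show "phi ` ({..<e} \<times> {..<d}) \<subseteq> U"
  proof clarify
    fix s k show "phi (s, k) \<in> U" using cop_phi[of s k] n_pos by (simp add: phi_def U_def)
  qed
  show "card (phi ` ({..<e} \<times> {..<d})) = card U"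
  proof -
    have "card (phi ` ({..<e} \<times> {..<d})) = card ({..<e} \<times> {..<d})" by (rule card_image[OF phi_inj])
    also have "\<dots> = e * d" by (simp only: card_cartesian_product card_lessThan)
    also have "\<dots> = card U" by (simp only: ed card_U)
    finally show ?thesis .
  qed
qed

lemma V_union: "Vset n g nu d e 0 \<union> Vset n g nu d e 1 = U"
proof -
  have "Vset n g nu d e 0 \<union> Vset n g nu d e 1 = phi ` ({..<e} \<times> {..<d})"
  proof (intro equalityI subsetI)
    fix x assume "x \<in> Vset n g nu d e 0 \<union> Vset n g nu d e 1"
    then obtain s k where "x = (g ^ s * nu ^ k) mod n" "s < e" "k < d"
      unfolding Vset_def by blast
    thus "x \<in> phi ` ({..<e} \<times> {..<d})" unfolding phi_def by force
  next
    fix x assume "x \<in> phi ` ({..<e} \<times> {..<d})"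
    then obtain s k where x: "x = (g ^ s * nu ^ k) mod n" "s < e" "k < d"
      unfolding phi_def by force
    show "x \<in> Vset n g nu d e 0 \<union> Vset n g nu d e 1"
    proof (cases "(s + k) mod 2 = 0")
      case True
      hence "x \<in> Vset n g nu d e 0" 
        using Vset_memI[OF x(2,3), where i=0 and g=g and nu=nu and n="n1*n2"] True x(1) by simp
      thus ?thesis by simp
    next
      case False
      hence "(s + k) mod 2 = 1" by presburger
      hence "x \<in> Vset n g nu d e 1" 
        using Vset_memI[OF x(2,3), where i=1 and g=g and nu=nu and n="n1*n2"] \<open>(s + k) mod 2 = 1\<close> x(1) by simp
      thus ?thesis by simp
    qed
  qed
  thus ?thesis using phi_image by (rule trans)
qed

lemma V_eq: "i \<in> {0, 1} \<Longrightarrow> Vset n g nu d e i = Lset i"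
proof
  assume i: "i \<in> {0, 1}"
  show "Vset n g nu d e i \<subseteq> Lset i" using V_sub[OF i] .
  show "Lset i \<subseteq> Vset n g nu d e i"
  proof
    fix x assume x: "x \<in> Lset i"
    hence "x \<in> U" by (simp add: Lset_def U_def)
    hence "x \<in> Vset n g nu d e 0 \<or> x \<in> Vset n g nu d e 1" using V_union by auto
    moreover have "x \<notin> Lset (1 - i)" using x i by (auto simp: Lset_def sg_def)
    ultimately show "x \<in> Vset n g nu d e i" using V_sub[of "1 - i"] i by auto
  qed
qed

end

lemma half_card:
  assumes "finite A" "A = B0 \<union> B1" "B0 \<inter> B1 = {}" "inj_on f A" "f ` B0 \<subseteq> B1" "f ` B1 \<subseteq> B0"
  shows "card B0 = card A div 2" "card B1 = card A div 2"
proof -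
  have f0: "finite B0" "finite B1" using assms(1,2) by auto
  have "card B0 \<le> card B1"
    by (rule card_inj_on_le[OF inj_on_subset[OF assms(4)] assms(5) f0(2)]) (use assms(2) in auto)
  moreover have "card B1 \<le> card B0"
    by (rule card_inj_on_le[OF inj_on_subset[OF assms(4)] assms(6) f0(1)]) (use assms(2) in auto)
  moreover have "card A = card B0 + card B1" using assms(2,3) f0 by (simp add: card_Un_disjoint)
  ultimately show "card B0 = card A div 2" "card B1 = card A div 2" by simp_all
qed

lemma leg_nonzero:
  assumes "prime p" "\<not> p dvd x"
  shows "Legendre (int x) (int p) \<noteq> 0"
proof -
  have "\<not> [int x = 0] (mod int p)" using assms(2) by (simp add: cong_0_iff)
  thus ?thesis by (simp add: leg_zero_iff)
qed

lemma D_mult: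
  assumes "prime p" "p > 2" "\<not> p dvd r" "x \<in> Dset p j" "j \<in> {0, 1}"
  shows "(r * x) mod p \<in> Dset p (if Legendre (int r) (int p) = 1 then j else 1 - j)"
proof -
  have x: "0 < x" "x < p" "Legendre (int x) (int p) = (if j = 0 then 1 else -1)"
    using assms(4) by (auto simp: Dset_def)
  have "\<not> p dvd x" using x by (auto dest: dvd_imp_le)
  hence ndv: "\<not> p dvd r * x" using assms(1,3) by (simp add: prime_dvd_mult_iff)
  hence pos: "0 < (r * x) mod p" by (simp add: mod_greater_zero_iff_not_dvd)
  have lt: "(r * x) mod p < p" using assms(2) by simp
  have "Legendre (int ((r * x) mod p)) (int p) = Legendre (int (r * x)) (int p)"
    by (rule leg_cong, subst cong_int_iff) (simp add: cong_def)
  also have "\<dots> = Legendre (int r) (int p) * Legendre (int x) (int p)"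
    using leg_mult[OF assms(1,2)] by simp
  finally have eq: "Legendre (int ((r * x) mod p)) (int p) = Legendre (int r) (int p) * Legendre (int x) (int p)" .
  have "Legendre (int r) (int p) \<in> {1, -1}" using leg_nonzero[OF assms(1,3)] leg_range[of "int r" "int p"] by auto
  thus ?thesis using pos lt eq x(3) assms(5) by (auto simp: Dset_def)
qed

lemma D_split:
  assumes "prime p"
  shows "Dset p 0 \<union> Dset p 1 = {1..<p}" "Dset p 0 \<inter> Dset p 1 = {}"
proof -
  have lr: "Legendre (int x) (int p) = 1 \<or> Legendre (int x) (int p) = -1" if "0 < x" "x < p" for x
  proof -
    have "\<not> p dvd x" using that by (auto dest: dvd_imp_le)
    thus ?thesis using leg_nonzero[OF assms] leg_range[of "int x" "int p"] by auto
  qed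
  show "Dset p 0 \<union> Dset p 1 = {1..<p}"
  proof (intro equalityI subsetI)
    fix x assume "x \<in> {1..<p}"
    hence x: "0 < x" "x < p" by auto
    from lr[OF x] show "x \<in> Dset p 0 \<union> Dset p 1" using x by (auto simp: Dset_def)
  qed (auto simp: Dset_def)
  show "Dset p 0 \<inter> Dset p 1 = {}" by (auto simp: Dset_def)
qed

lemma D_card:
  assumes "prime p" "p > 2" "residue_primroot p r" "j \<in> {0, 1}"
  shows "card (Dset p j) = (p - 1) div 2"
proof -
  have Lr: "Legendre (int r) (int p) = -1" by (rule leg_primroot[OF assms(1-3)])
  have ndv: "\<not> p dvd r" using leg_nonzero Lr
    by (metis assms(1) cong_0_iff leg_zero_iff of_nat_dvd_iff neg_equal_0_iff_equal zero_neq_one)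
  define f where "f = (\<lambda>x. (r * x) mod p)"
  have inj: "inj_on f {1..<p}"
  proof (rule inj_onI)
    fix x y assume "x \<in> {1..<p}" "y \<in> {1..<p}" "f x = f y"
    hence "[r * x = r * y] (mod p)" by (simp add: f_def cong_def)
    moreover have "coprime r p" using ndv assms(1) by (simp add: prime_imp_coprime coprime_commute)
    ultimately have "[x = y] (mod p)" by (simp add: cong_mult_lcancel_nat)
    thus "x = y" using \<open>x \<in> {1..<p}\<close> \<open>y \<in> {1..<p}\<close> by (simp add: cong_def)
  qed
  have m0: "f ` Dset p 0 \<subseteq> Dset p 1" using D_mult[OF assms(1,2) ndv, of _ 0] Lr by (auto simp: f_def)
  have m1: "f ` Dset p 1 \<subseteq> Dset p 0" using D_mult[OF assms(1,2) ndv, of _ 1] Lr by (auto simp: f_def)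
  have "card (Dset p 0) = card {1..<p} div 2" "card (Dset p 1) = card {1..<p} div 2"
    using half_card[OF _ D_split(1)[OF assms(1), symmetric] D_split(2)[OF assms(1)] inj m0 m1] by auto
  thus ?thesis using assms(4) by auto
qed

context nt begin

lemma cop_mod: "coprime y n \<Longrightarrow> coprime (y mod n) n"
proof -
  assume "coprime y n"
  moreover have "n \<noteq> 0" using n_pos by simp
  ultimately show ?thesis by (simp only: coprime_mod_left_iff[OF \<open>n \<noteq> 0\<close>])
qed

lemma cop_mult: "coprime r n \<Longrightarrow> coprime x n \<Longrightarrow> coprime (r * x) n"
  by (simp only: coprime_mult_left_iff)

lemma cop_n1: "coprime x n \<Longrightarrow> \<not> n1 dvd x"
proof
  assume "coprime x n" "n1 dvd x"
  have "coprime x n1" using \<open>coprime x n\<close> by simp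
  hence "is_unit n1" using coprime_common_divisor[OF _ \<open>n1 dvd x\<close> dvd_refl] by blast
  thus False using n1_gt2 by simp
qed

lemma cop_n2: "coprime x n \<Longrightarrow> \<not> n2 dvd x"
proof
  assume "coprime x n" "n2 dvd x"
  have "coprime x n2" using \<open>coprime x n\<close> by simp
  hence "is_unit n2" using coprime_common_divisor[OF _ \<open>n2 dvd x\<close> dvd_refl] by blast
  thus False using n2_gt2 by simp
qed

lemma L_unit: "coprime x n \<Longrightarrow> L x = 1 \<or> L x = -1"
  using leg_nonzero[OF p1 cop_n1] leg_range[of "int x" "int n1"] by auto

lemma Lset_mult:
  assumes "coprime r n" "x \<in> Lset i" "i \<in> {0, 1}"
  shows "(r * x) mod n \<in> Lset (if L r = 1 then i else 1 - i)"
proof -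
  have x: "x < n" "coprime x n" "L x = sg i" using assms(2) by (auto simp: Lset_def)
  have c: "coprime ((r * x) mod n) n" by (rule cop_mod[OF cop_mult[OF assms(1) x(2)]])
  have "L ((r * x) mod n) = L r * L x" by (simp only: L_mod L_mult)
  moreover have "L r = 1 \<or> L r = -1" by (rule L_unit[OF assms(1)])
  ultimately have "L ((r * x) mod n) = sg (if L r = 1 then i else 1 - i)"
    using x(3) assms(3) by (auto simp: sg_def)
  moreover have "(r * x) mod n < n" using n_pos by simp
  ultimately show ?thesis using c by (simp add: Lset_def)
qed

lemma Lset_union: "Lset 0 \<union> Lset 1 = U" "Lset 0 \<inter> Lset 1 = {}"
proof -
  show "Lset 0 \<union> Lset 1 = U"
  proof (intro equalityI subsetI)
    fix x assume "x \<in> U"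
    hence x: "x < n" "coprime x n" by (auto simp: U_def)
    from L_unit[OF x(2)] show "x \<in> Lset 0 \<union> Lset 1" using x by (auto simp: Lset_def sg_def)
  qed (auto simp: Lset_def U_def)
  show "Lset 0 \<inter> Lset 1 = {}" by (auto simp: Lset_def sg_def)
qed

lemma Lset_card: "i \<in> {0, 1} \<Longrightarrow> card (Lset i) = (n1 - 1) * (n2 - 1) div 2"
proof -
  assume i: "i \<in> {0, 1}"
  define f where "f = (\<lambda>x. (g * x) mod n)"
  have inj: "inj_on f U"
  proof (rule inj_onI)
    fix x y assume "x \<in> U" "y \<in> U" "f x = f y"
    hence "[g * x = g * y] (mod n)" by (simp add: f_def cong_def)
    hence "[x = y] (mod n)" using cong_mult_lcancel_nat[OF cop_g] by blast
    thus "x = y" using \<open>x \<in> U\<close> \<open>y \<in> U\<close> by (simp add: U_def cong_def)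
  qed
  have m0: "f ` Lset 0 \<subseteq> Lset 1" using Lset_mult[OF cop_g, of _ 0] L_g by (auto simp: f_def)
  have m1: "f ` Lset 1 \<subseteq> Lset 0" using Lset_mult[OF cop_g, of _ 1] L_g by (auto simp: f_def)
  have fin: "finite U" by (simp add: U_def)
  have "card (Lset 0) = card U div 2" "card (Lset 1) = card U div 2"
    using half_card[OF fin Lset_union(1)[symmetric] Lset_union(2) inj m0 m1] by auto
  thus ?thesis using i card_U by auto
qed

definition Zs where "Zs i j h = Lset i \<union> (\<lambda>x. n2 * x) ` Dset n1 j \<union> (\<lambda>x. n1 * x) ` Dset n2 h"

lemma mod_n2: "(r * (n2 * x)) mod n = n2 * ((r * x) mod n1)"
proof -
  have "(r * (n2 * x)) mod n = (n2 * (r * x)) mod (n2 * n1)" by (simp only: ac_simps)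
  also have "\<dots> = n2 * ((r * x) mod n1)" by (rule mod_mult_mult1)
  finally show ?thesis .
qed

lemma mod_n1: "(r * (n1 * x)) mod n = n1 * ((r * x) mod n2)"
proof -
  have "(r * (n1 * x)) mod n = (n1 * (r * x)) mod (n1 * n2)" by (simp only: ac_simps)
  also have "\<dots> = n1 * ((r * x) mod n2)" by (rule mod_mult_mult1)
  finally show ?thesis .
qed

lemma D_lt: "x \<in> Dset p j \<Longrightarrow> 0 < x \<and> x < p" by (simp add: Dset_def)

lemma Zs_sub: "Zs i j h \<subseteq> {1..<n}"
proof
  fix k assume "k \<in> Zs i j h"
  then consider "k \<in> Lset i" | x where "x \<in> Dset n1 j" "k = n2 * x" | y where "y \<in> Dset n2 h" "k = n1 * y"
    unfolding Zs_def by blast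
  thus "k \<in> {1..<n}"
  proof cases
    case 1
    hence "k < n" "coprime k n" by (auto simp: Lset_def)
    moreover have "k \<noteq> 0"
    proof
      assume "k = 0"
      with cop_n1[OF \<open>coprime k n\<close>] show False by simp
    qed
    ultimately show ?thesis by simp
  next
    case (2 x)
    hence "0 < x" "x < n1" using D_lt by auto
    thus ?thesis using 2 n2_gt2 by (simp add: mult.commute)
  next
    case (3 y)
    hence "0 < y" "y < n2" using D_lt by auto
    thus ?thesis using 3 n1_gt2 by simp
  qed
qed

lemma Zs_card:
  assumes "i \<in> {0, 1}" "j \<in> {0, 1}" "h \<in> {0, 1}"
  shows "card (Zs i j h) = (n1 - 1) * (n2 - 1) div 2 + (n1 - 1) div 2 + (n2 - 1) div 2"
proof -
  have fL: "finite (Lset i)" by (simp add: Lset_def)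
  have fD1: "finite (Dset n1 j)" by (simp add: Dset_def)
  have fD2: "finite (Dset n2 h)" by (simp add: Dset_def)
  have i1: "inj_on (\<lambda>x. n2 * x) (Dset n1 j)" using n2_gt2 by (auto simp: inj_on_def)
  have i2: "inj_on (\<lambda>x. n1 * x) (Dset n2 h)" using n1_gt2 by (auto simp: inj_on_def)
  have d1: "Lset i \<inter> (\<lambda>x. n2 * x) ` Dset n1 j = {}"
  proof -
    have "\<not> coprime (n2 * x) n" for x
      using cop_n2[of "n2 * x"] by auto
    thus ?thesis by (auto simp: Lset_def)
  qed
  have d2: "(Lset i \<union> (\<lambda>x. n2 * x) ` Dset n1 j) \<inter> (\<lambda>x. n1 * x) ` Dset n2 h = {}"
  proof -
    have "\<not> coprime (n1 * x) n" for x
      using cop_n1[of "n1 * x"] by auto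
    moreover have "n1 * y \<noteq> n2 * x" if "x \<in> Dset n1 j" for x y
    proof
      assume eq: "n1 * y = n2 * x"
      hence "n1 dvd n2 * x" by (metis dvd_triv_left)
      hence "n1 dvd x" using cop12 by (simp add: coprime_dvd_mult_right_iff)
      thus False using D_lt[OF that] by (auto dest: dvd_imp_le)
    qed
    ultimately show ?thesis by (auto simp: Lset_def)
  qed
  have "card (Zs i j h) = card (Lset i) + card ((\<lambda>x. n2 * x) ` Dset n1 j) + card ((\<lambda>x. n1 * x) ` Dset n2 h)"
    unfolding Zs_def using d1 d2 fL fD1 fD2 by (simp add: card_Un_disjoint)
  also have "\<dots> = card (Lset i) + card (Dset n1 j) + card (Dset n2 h)"
    by (simp add: card_image[OF i1] card_image[OF i2])
  also have "\<dots> = (n1 - 1) * (n2 - 1) div 2 + (n1 - 1) div 2 + (n2 - 1) div 2"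
    using Lset_card[OF assms(1)] D_card[OF p1 n1_gt2 r1 assms(2)] D_card[OF p2 n2_gt2 r2 assms(3)] by simp
  finally show ?thesis .
qed

end

context nt begin

lemma n1_ndvd: "coprime r n \<Longrightarrow> \<not> n1 dvd r" by (rule cop_n1)
lemma n2_ndvd: "coprime r n \<Longrightarrow> \<not> n2 dvd r" by (rule cop_n2)

lemma Zs_q:
  assumes "coprime r n" "L r = 1" "M r = 1" "k \<in> Zs i j h" "i \<in> {0, 1}" "j \<in> {0, 1}" "h \<in> {0, 1}"
  shows "(r * k) mod n \<in> Zs i j h"
proof -
  from assms(4) consider "k \<in> Lset i" | x where "x \<in> Dset n1 j" "k = n2 * x" | y where "y \<in> Dset n2 h" "k = n1 * y"
    unfolding Zs_def by blast
  thus ?thesis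
  proof cases
    case 1
    thus ?thesis using Lset_mult[OF assms(1) 1 assms(5)] assms(2) by (simp add: Zs_def)
  next
    case (2 x)
    have "(r * x) mod n1 \<in> Dset n1 j" using D_mult[OF p1 n1_gt2 n1_ndvd[OF assms(1)] 2(1) assms(6)] assms(2) by simp
    hence "n2 * ((r * x) mod n1) \<in> (\<lambda>x. n2 * x) ` Dset n1 j" by (rule imageI)
    thus ?thesis using 2(2) by (simp add: mod_n2 Zs_def)
  next
    case (3 y)
    have "(r * y) mod n2 \<in> Dset n2 h" using D_mult[OF p2 n2_gt2 n2_ndvd[OF assms(1)] 3(1) assms(7)] assms(3) by simp
    hence "n1 * ((r * y) mod n2) \<in> (\<lambda>x. n1 * x) ` Dset n2 h" by (rule imageI)
    thus ?thesis using 3(2) by (simp add: mod_n1 Zs_def)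
  qed
qed

lemma Zs_swap:
  assumes "coprime r n" "L r = -1" "M r = -1" "0 < k" "k < n" "i \<in> {0, 1}" "j \<in> {0, 1}" "h \<in> {0, 1}"
  shows "k \<in> Zs i j h \<or> (r * k) mod n \<in> Zs i j h"
proof (cases "coprime k n")
  case True
  from L_unit[OF True] consider "k \<in> Lset i" | "k \<in> Lset (1 - i)"
    using assms(5,6) True by (auto simp: Lset_def sg_def)
  thus ?thesis
  proof cases
    case 1 thus ?thesis by (simp add: Zs_def)
  next
    case 2
    have "(r * k) mod n \<in> Lset i" using Lset_mult[OF assms(1) 2] assms(2,6) by auto
    thus ?thesis by (simp add: Zs_def)
  qed
next
  case False
  hence "\<not> coprime k n1 \<or> \<not> coprime k n2" by simp
  hence "n1 dvd k \<or> n2 dvd k" using p1 p2 by (metis prime_imp_coprime coprime_commute)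
  thus ?thesis
  proof
    assume "n2 dvd k"
    then obtain x where x: "k = n2 * x" by (auto elim: dvdE)
    have "0 < x" using x assms(4) by (cases "x = 0") auto
    moreover have "x < n1" using x assms(5) n2_gt2 by (simp add: mult.commute)
    ultimately have "x \<in> {1..<n1}" by simp
    hence "x \<in> Dset n1 j \<or> x \<in> Dset n1 (1 - j)" using D_split(1)[OF p1] assms(7) by auto
    thus ?thesis
    proof
      assume "x \<in> Dset n1 j"
      hence "n2 * x \<in> (\<lambda>x. n2 * x) ` Dset n1 j" by (rule imageI)
      thus ?thesis using x by (simp add: Zs_def)
    next
      assume xd: "x \<in> Dset n1 (1 - j)"
      have "(r * x) mod n1 \<in> Dset n1 j" using D_mult[OF p1 n1_gt2 n1_ndvd[OF assms(1)] xd] assms(2,7) by auto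
      hence "n2 * ((r * x) mod n1) \<in> (\<lambda>x. n2 * x) ` Dset n1 j" by (rule imageI)
      thus ?thesis using x by (simp add: mod_n2 Zs_def)
    qed
  next
    assume "n1 dvd k"
    then obtain y where y: "k = n1 * y" by (auto elim: dvdE)
    have "0 < y" using y assms(4) by (cases "y = 0") auto
    moreover have "y < n2" using y assms(5) n1_gt2 by simp
    ultimately have "y \<in> {1..<n2}" by simp
    hence "y \<in> Dset n2 h \<or> y \<in> Dset n2 (1 - h)" using D_split(1)[OF p2] assms(8) by auto
    thus ?thesis
    proof
      assume "y \<in> Dset n2 h"
      hence "n1 * y \<in> (\<lambda>x. n1 * x) ` Dset n2 h" by (rule imageI)
      thus ?thesis using y by (simp add: Zs_def)
    next
      assume yd: "y \<in> Dset n2 (1 - h)"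
      have "(r * y) mod n2 \<in> Dset n2 h" using D_mult[OF p2 n2_gt2 n2_ndvd[OF assms(1)] yd] assms(3,8) by auto
      hence "n1 * ((r * y) mod n2) \<in> (\<lambda>x. n1 * x) ` Dset n2 h" by (rule imageI)
      thus ?thesis using y by (simp add: mod_n1 Zs_def)
    qed
  qed
qed

lemma cop_nm1: "coprime (n - 1) n"
proof -
  define m where "m = n - 1"
  have nm: "n = Suc m" using n_pos by (simp add: m_def)
  have "coprime m (Suc m)" by simp
  thus ?thesis unfolding m_def[symmetric] by (simp only: nm)
qed

lemma L_nm1:
  assumes "[int n1 = -1] (mod 8)"
  shows "L (n - 1) = -1"
proof -
  have "[int (n - 1) = -1] (mod int n1)"
  proof -
    have "int (n - 1) = int n1 * int n2 - 1" using n_pos by (simp add: of_nat_diff)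
    thus ?thesis by (simp add: cong_iff_dvd_diff)
  qed
  hence "L (n - 1) = Legendre (-1) (int n1)" by (rule leg_cong)
  moreover have "n1 mod 4 = 3"
  proof -
    have "[int n1 = -1] (mod 4)" using assms by (rule cong_dvd_modulus) simp
    hence "int n1 mod 4 = 3" by (simp add: cong_def)
    hence "int (n1 mod 4) = 3" by (simp add: of_nat_mod)
    thus ?thesis by simp
  qed
  ultimately show ?thesis using leg_minus1[OF p1] by simp
qed

lemma M_nm1:
  assumes "[int n2 = -1] (mod 8)"
  shows "M (n - 1) = -1"
proof -
  have "[int (n - 1) = -1] (mod int n2)"
  proof -
    have "int (n - 1) = int n1 * int n2 - 1" using n_pos by (simp add: of_nat_diff)
    thus ?thesis by (simp add: cong_iff_dvd_diff)
  qed
  hence "M (n - 1) = Legendre (-1) (int n2)" by (rule leg_cong)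
  moreover have "n2 mod 4 = 3"
  proof -
    have "[int n2 = -1] (mod 4)" using assms by (rule cong_dvd_modulus) simp
    hence "int n2 mod 4 = 3" by (simp add: cong_def)
    hence "int (n2 mod 4) = 3" by (simp add: of_nat_mod)
    thus ?thesis by simp
  qed
  ultimately show ?thesis using leg_minus1[OF p2] by simp
qed

lemma arith: "n - ((n1 - 1) * (n2 - 1) div 2 + (n1 - 1) div 2 + (n2 - 1) div 2) = (n + 1) div 2"
  and arith2: "(n1 - 1) * (n2 - 1) div 2 + (n1 - 1) div 2 + (n2 - 1) div 2 < n"
proof -
  obtain u where u: "n1 = 2 * u + 1" using o1 oddE by blast
  obtain v where v: "n2 = 2 * v + 1" using o2 oddE by blast
  have a: "(n1 - 1) * (n2 - 1) div 2 = 2 * u * v" by (simp add: u v)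
  have b: "(n1 - 1) div 2 = u" "(n2 - 1) div 2 = v" by (simp_all add: u v)
  have c: "n = 4 * u * v + 2 * u + 2 * v + 1" by (simp add: u v algebra_simps)
  show "n - ((n1 - 1) * (n2 - 1) div 2 + (n1 - 1) div 2 + (n2 - 1) div 2) = (n + 1) div 2"
    unfolding a b c by simp
  show "(n1 - 1) * (n2 - 1) div 2 + (n1 - 1) div 2 + (n2 - 1) div 2 < n"
    unfolding a b c by simp
qed

end

context nt begin

lemma Zs_disj1: "Lset i \<inter> (\<lambda>x. n2 * x) ` Dset n1 j = {}"
proof -
  have "\<not> coprime (n2 * x) n" for x using cop_n2[of "n2 * x"] by auto
  thus ?thesis by (auto simp: Lset_def)
qed

lemma Zs_disj2: "(Lset i \<union> (\<lambda>x. n2 * x) ` Dset n1 j) \<inter> (\<lambda>x. n1 * x) ` Dset n2 h = {}"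
proof -
  have "\<not> coprime (n1 * x) n" for x using cop_n1[of "n1 * x"] by auto
  moreover have "n1 * y \<noteq> n2 * x" if "x \<in> Dset n1 j" for x y
  proof
    assume eq: "n1 * y = n2 * x"
    hence "n1 dvd n2 * x" by (metis dvd_triv_left)
    hence "n1 dvd x" using cop12 by (simp add: coprime_dvd_mult_right_iff)
    thus False using D_lt[OF that] by (auto dest: dvd_imp_le)
  qed
  ultimately show ?thesis by (auto simp: Lset_def)
qed

lemma root_prod_eq:
  fixes theta :: "'b::field"
  shows "root_prod theta 1 (Lset i) * root_prod theta n2 (Dset n1 j) * root_prod theta n1 (Dset n2 h)
         = (\<Prod>k\<in>Zs i j h. [:- (theta ^ k), 1:])"
proof -
  have fL: "finite (Lset i)" by (simp add: Lset_def)
  have fD1: "finite (Dset n1 j)" by (simp add: Dset_def)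
  have fD2: "finite (Dset n2 h)" by (simp add: Dset_def)
  have i1: "inj_on (\<lambda>x. n2 * x) (Dset n1 j)" using n2_gt2 by (auto simp: inj_on_def)
  have i2: "inj_on (\<lambda>x. n1 * x) (Dset n2 h)" using n1_gt2 by (auto simp: inj_on_def)
  have r1: "root_prod theta n2 (Dset n1 j) = (\<Prod>k\<in>(\<lambda>x. n2 * x) ` Dset n1 j. [:- (theta ^ k), 1:])"
    unfolding root_prod_def by (simp add: prod.reindex[OF i1])
  have r2: "root_prod theta n1 (Dset n2 h) = (\<Prod>k\<in>(\<lambda>x. n1 * x) ` Dset n2 h. [:- (theta ^ k), 1:])"
    unfolding root_prod_def by (simp add: prod.reindex[OF i2])
  have r0: "root_prod theta 1 (Lset i) = (\<Prod>k\<in>Lset i. [:- (theta ^ k), 1:])"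
    unfolding root_prod_def by simp
  show ?thesis
    unfolding r0 r1 r2 Zs_def
    using Zs_disj1[of i j] Zs_disj2[of i j h] fL fD1 fD2
    by (simp add: prod.union_disjoint)
qed

end

theorem mainTheorem17:
  fixes n1 n2 q N g1 g2 g nu :: nat
    and emb :: "'a::{field,finite} \<Rightarrow> 'b::{field,finite}"
    and theta :: 'b
  defines "n \<equiv> n1 * n2"
    and "d \<equiv> gcd (n1 - 1) (n2 - 1)"
    and "e \<equiv> (n1 - 1) * (n2 - 1) div gcd (n1 - 1) (n2 - 1)"
  assumes "prime n1" "prime n2" "odd n1" "odd n2" "n1 \<noteq> n2"
    and "card (UNIV :: 'a set) = q" "coprime q n"
    and "residue_primroot n1 g1" "residue_primroot n2 g2"
    and "g < n" "[g = g1] (mod n1)" "[g = g2] (mod n2)"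
    and "nu < n" "[nu = g] (mod n1)" "[nu = 1] (mod n2)"
    and "N = ord n q"
    and "card (UNIV :: 'b set) = q ^ N"
    and "inj emb" "emb 1 = 1" "\<And>x y. emb (x + y) = emb x + emb y" "\<And>x y. emb (x * y) = emb x * emb y"
    and "theta ^ n = 1" "\<And>k. 0 < k \<Longrightarrow> k < n \<Longrightarrow> theta ^ k \<noteq> 1"
    and "q mod n \<in> Vset n g nu d e 0"
    and "Legendre (int q) (int n1) = 1" "Legendre (int q) (int n2) = 1"
  shows "\<forall>i\<in>{0,1}. \<forall>j\<in>{0,1}. \<forall>h\<in>{0,1}.
           \<exists>G :: 'a poly.
             map_poly emb G = root_prod theta 1 (Vset n g nu d e i)
                              * root_prod theta n2 (Dset n1 j) * root_prod theta n1 (Dset n2 h)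
           \<and> code_dim (cyclic_code n G) = (n + 1) div 2
           \<and> sqrt (real n) \<le> real (min_odd_like_weight n (cyclic_code n G))
           \<and> ([int n1 = -1] (mod 8) \<and> [int n2 = -1] (mod 8) \<longrightarrow>
                (min_odd_like_weight n (cyclic_code n G))\<^sup>2 - min_odd_like_weight n (cyclic_code n G) + 1 \<ge> n)"
proof (intro ballI)
  fix i j h :: nat
  assume ijh: "i \<in> {0, 1}" "j \<in> {0, 1}" "h \<in> {0, 1}"
  interpret N: nt n1 n2 g1 g2 g nu
    by unfold_locales (use assms(4-8,11,12,14,15,17,18) in auto)
  have Veq: "Vset n g nu d e i = N.Lset i" unfolding assms(1-3) by (rule N.V_eq[OF ijh(1)])
  define Z where "Z = N.Zs i j h"
  have nn: "n = n1 * n2" using assms(1) by simp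
  have emb_loc: "embed emb"
    by unfold_locales (use assms(21-24) in auto)
  have qdef: "embed.q TYPE('a) = q" using embed.q_def[OF emb_loc] assms(9) by simp
  have Zsub: "Z \<subseteq> {1..<n}" unfolding Z_def nn by (rule N.Zs_sub)
  have Zq: "(q * k) mod n \<in> Z" if "k \<in> Z" for k
    unfolding nn Z_def
    by (rule N.Zs_q) (use assms(10,28,29) that ijh in \<open>simp_all add: Z_def nn\<close>)
  interpret C: cyc emb theta n Z
  proof unfold_locales
    show "inj emb" by (rule assms(21))
    show "emb 1 = 1" by (rule assms(22))
    show "emb (x + y) = emb x + emb y" for x y by (rule assms(23))
    show "emb (x * y) = emb x * emb y" for x y by (rule assms(24))
    show "1 < n" unfolding nn by (rule N.n_gt1)
    show "theta ^ n = 1" by (rule assms(25))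
    show "theta ^ k \<noteq> 1" if "0 < k" "k < n" for k using assms(26) that by blast
    show "coprime (embed.q TYPE('a)) n" using assms(10) qdef by simp
    show "Z \<subseteq> {1..<n}" by (rule Zsub)
    show "embed.q TYPE('a) * k mod n \<in> Z" if "k \<in> Z" for k using Zq[OF that] qdef by simp
  qed
  have cardZ: "card Z = (n1 - 1) * (n2 - 1) div 2 + (n1 - 1) div 2 + (n2 - 1) div 2"
    unfolding Z_def by (rule N.Zs_card[OF ijh])
  have mapG: "map_poly emb C.G = root_prod theta 1 (Vset n g nu d e i)
                              * root_prod theta n2 (Dset n1 j) * root_prod theta n1 (Dset n2 h)"
  proof -
    have "map_poly emb C.G = C.P" by (rule C.G)
    also have "\<dots> = (\<Prod>k\<in>Z. [:- (theta ^ k), 1:])" by (simp add: C.P_def)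
    also have "\<dots> = root_prod theta 1 (N.Lset i) * root_prod theta n2 (Dset n1 j) * root_prod theta n1 (Dset n2 h)"
      unfolding Z_def by (rule N.root_prod_eq[symmetric])
    finally show ?thesis unfolding Veq .
  qed
  have dim: "code_dim (cyclic_code n C.G) = (n + 1) div 2"
  proof -
    have "code_dim (cyclic_code n C.G) = n - card Z" by (rule C.dim_code)
    also have "\<dots> = (n + 1) div 2" unfolding cardZ nn by (rule N.arith)
    finally show ?thesis .
  qed
  have multg: "m \<in> Z \<or> (g * m) mod n \<in> Z" if "0 < m" "m < n" for m
  proof -
    have "m < n1 * n2" using that(2) nn by simp
    from N.Zs_swap[OF N.cop_g N.L_g N.M_g that(1) this ijh] show ?thesis unfolding Z_def nn .
  qed
  have sq: "n \<le> min_odd_like_weight n (cyclic_code n C.G) ^ 2" by (rule C.min_bounds(1)[OF multg])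
  have sqrt: "sqrt (real n) \<le> real (min_odd_like_weight n (cyclic_code n C.G))"
  proof -
    have "real n \<le> real (min_odd_like_weight n (cyclic_code n C.G) ^ 2)"
      using sq by (simp only: of_nat_le_iff)
    hence "sqrt (real n) \<le> sqrt (real (min_odd_like_weight n (cyclic_code n C.G) ^ 2))"
      by (rule real_sqrt_le_mono)
    thus ?thesis by simp
  qed
  have last: "(min_odd_like_weight n (cyclic_code n C.G))\<^sup>2 - min_odd_like_weight n (cyclic_code n C.G) + 1 \<ge> n"
    if "[int n1 = -1] (mod 8)" "[int n2 = -1] (mod 8)"
  proof -
    have multm: "m \<in> Z \<or> ((n - 1) * m) mod n \<in> Z" if "0 < m" "m < n" for m
    proof -
      have "m < n1 * n2" using that(2) nn by simp
      from N.Zs_swap[OF N.cop_nm1 N.L_nm1[OF \<open>[int n1 = -1] (mod 8)\<close>] N.M_nm1[OF \<open>[int n2 = -1] (mod 8)\<close>] that(1) this ijh]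
      show ?thesis unfolding Z_def nn .
    qed
    show ?thesis using C.min_bounds(2)[OF multm refl] by simp
  qed
  show "\<exists>G :: 'a poly.
             map_poly emb G = root_prod theta 1 (Vset n g nu d e i)
                              * root_prod theta n2 (Dset n1 j) * root_prod theta n1 (Dset n2 h)
           \<and> code_dim (cyclic_code n G) = (n + 1) div 2
           \<and> sqrt (real n) \<le> real (min_odd_like_weight n (cyclic_code n G))
           \<and> ([int n1 = -1] (mod 8) \<and> [int n2 = -1] (mod 8) \<longrightarrow>
                (min_odd_like_weight n (cyclic_code n G))\<^sup>2 - min_odd_like_weight n (cyclic_code n G) + 1 \<ge> n)"
    by (rule exI[of _ C.G], intro conjI impI mapG dim sqrt last; erule conjE; assumption)
qed

end
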